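(* Let $G$ be a connected cubic circulant graph with edge ideal $I(G)\subseteq\Bbbk[x_1,\ldots,x_{2n}]$, let $t\ge1$, and let $\mathbf a\in\mathbb N^{2n}$ be an exponent such that $x^{\mathbf a}\notin I(G)^{(t)}$. Then $$\sqrt{I(G)^t:x^{\mathbf a}}=\sqrt{I(G)^{(t)}:x^{\mathbf a}}.$$
   Context: A cubic circulant graph is $C_{2n}(a,n)$ for integers $1\le a<n$: the simple graph on $[2n]$ in which distinct $i,j$ are adjacent iff $|i-j|\in\{a,n,2n-a\}$. $I(G)=(x_ix_j\mid\{i,j\}\in E(G))$, and $x^{\mathbf a}=x_1^{a_1}\cdots x_{2n}^{a_{2n}}$. For a squarefree monomial ideal $I=P_1\cap\cdots\cap P_r$ (minimal primary decomposition), $I^{(t)}=P_1^t\cap\cdots\cap P_r^t$. *)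

theory Defs
  imports Main "HOL-Library.Poly_Mapping"
begin

definition gen_ideal :: "'a::comm_ring_1 set \<Rightarrow> 'a set \<Rightarrow> 'a set" where
  "gen_ideal R X = {(\<Sum>i<k. r i * g i) | (k::nat) r g. \<forall>i<k. r i \<in> R \<and> g i \<in> X}"

definition is_ideal :: "'a::comm_ring_1 set \<Rightarrow> 'a set \<Rightarrow> bool" where
  "is_ideal R I \<longleftrightarrow> I \<subseteq> R \<and> 0 \<in> I \<and> (\<forall>x\<in>I. \<forall>y\<in>I. x + y \<in> I)
     \<and> (\<forall>r\<in>R. \<forall>x\<in>I. r * x \<in> I)"

fun ideal_pow :: "'a::comm_ring_1 set \<Rightarrow> 'a set \<Rightarrow> nat \<Rightarrow> 'a set" where
  "ideal_pow R I 0 = R"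
| "ideal_pow R I (Suc t) = gen_ideal R {x * y | x y. x \<in> ideal_pow R I t \<and> y \<in> I}"

definition colon :: "'a::comm_ring_1 set \<Rightarrow> 'a set \<Rightarrow> 'a \<Rightarrow> 'a set" where
  "colon R I f = {g \<in> R. g * f \<in> I}"

definition radical :: "'a::comm_ring_1 set \<Rightarrow> 'a set \<Rightarrow> 'a set" where
  "radical R I = {f \<in> R. \<exists>k. f ^ k \<in> I}"

definition prime_ideal :: "'a::comm_ring_1 set \<Rightarrow> 'a set \<Rightarrow> bool" where
  "prime_ideal R P \<longleftrightarrow> is_ideal R P \<and> P \<noteq> R
     \<and> (\<forall>a\<in>R. \<forall>b\<in>R. a * b \<in> P \<longrightarrow> a \<in> P \<or> b \<in> P)"

definition minimal_primes :: "'a::comm_ring_1 set \<Rightarrow> 'a set \<Rightarrow> 'a set set" where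
  "minimal_primes R I = {P. prime_ideal R P \<and> I \<subseteq> P \<and>
     (\<forall>Q. prime_ideal R Q \<and> I \<subseteq> Q \<and> Q \<subseteq> P \<longrightarrow> Q = P)}"

text \<open>Symbolic power of a radical (e.g. squarefree monomial) ideal: its minimal primary
  decomposition is the intersection of its minimal primes, so
  I^(t) = intersection of P^t over the minimal primes P of I.\<close>
definition symbolic_power :: "'a::comm_ring_1 set \<Rightarrow> 'a set \<Rightarrow> nat \<Rightarrow> 'a set" where
  "symbolic_power R I t = R \<inter> \<Inter> {ideal_pow R P t | P. P \<in> minimal_primes R I}"

type_synonym 'k mpoly = "(nat \<Rightarrow>\<^sub>0 nat) \<Rightarrow>\<^sub>0 'k"

definition polyring :: "nat \<Rightarrow> 'k::field mpoly set" where
  "polyring N = {p :: 'k mpoly. \<forall>m \<in> Poly_Mapping.keys p. Poly_Mapping.keys m \<subseteq> {1..N}}"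

definition var :: "nat \<Rightarrow> 'k::field mpoly" where
  "var i = Poly_Mapping.single (Poly_Mapping.single i 1) 1"

definition monom :: "nat \<Rightarrow> (nat \<Rightarrow> nat) \<Rightarrow> 'k::field mpoly" where
  "monom N e = (\<Prod>i\<in>{1..N}. var i ^ e i)"

definition circ_adj :: "nat \<Rightarrow> nat \<Rightarrow> nat \<Rightarrow> nat \<Rightarrow> bool" where
  "circ_adj n a i j \<longleftrightarrow> i \<in> {1..2*n} \<and> j \<in> {1..2*n} \<and> i \<noteq> j \<and>
     (let d = (if i \<le> j then j - i else i - j) in d = a \<or> d = n \<or> d = 2*n - a)"

definition circ_connected :: "nat \<Rightarrow> nat \<Rightarrow> bool" where
  "circ_connected n a \<longleftrightarrow> (\<forall>i\<in>{1..2*n}. \<forall>j\<in>{1..2*n}. (circ_adj n a)\<^sup>*\<^sup>* i j)"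

definition edge_ideal_circ :: "nat \<Rightarrow> nat \<Rightarrow> 'k::field mpoly set" where
  "edge_ideal_circ n a = gen_ideal (polyring (2*n)) {var i * var j | i j. circ_adj n a i j}"

end

theory Submission
  imports Defs
begin

definition cnt :: "('a \<times> 'a) list \<Rightarrow> 'a \<Rightarrow> nat" where
  "cnt L x = length (filter (\<lambda>p. fst p = x) L) + length (filter (\<lambda>p. snd p = x) L)"

lemma cnt_Nil[simp]: "cnt [] x = 0" by (simp add: cnt_def)
lemma cnt_Cons[simp]: "cnt (p # L) x = cnt L x + (if fst p = x then 1 else 0) + (if snd p = x then 1 else 0)"
  by (simp add: cnt_def)
lemma cnt_append[simp]: "cnt (L1 @ L2) x = cnt L1 x + cnt L2 x"
  by (simp add: cnt_def)
lemma cnt_replicate[simp]: "cnt (replicate k p) x = k * ((if fst p = x then 1 else 0) + (if snd p = x then 1 else 0))"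
  by (induction k) auto
lemma cnt_take_le: "cnt (take k L) x \<le> cnt L x"
proof -
  have "cnt L x = cnt (take k L) x + cnt (drop k L) x"
    using cnt_append[of "take k L" "drop k L" x] by simp
  then show ?thesis by simp
qed

definition ws :: "('a \<Rightarrow> nat) \<Rightarrow> 'a set \<Rightarrow> int" where
  "ws w X = (\<Sum>x\<in>X. int (w x))"

lemma ws_nonneg: "ws w X \<ge> 0" by (simp add: ws_def sum_nonneg)

lemma ws_mono: "finite Y \<Longrightarrow> X \<subseteq> Y \<Longrightarrow> ws w X \<le> ws w Y"
  unfolding ws_def by (rule sum_mono2) auto

lemma ws_Un_Int: "finite X \<Longrightarrow> finite Y \<Longrightarrow> ws w (X \<union> Y) + ws w (X \<inter> Y) = ws w X + ws w Y"
  unfolding ws_def by (rule sum.union_inter)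

locale bip =
  fixes adj :: "'a \<Rightarrow> 'a \<Rightarrow> bool" and col :: "'a \<Rightarrow> bool"
  assumes sym: "adj x y \<Longrightarrow> adj y x"
    and bipart: "adj x y \<Longrightarrow> col x \<noteq> col y"
begin

definition nb :: "'a set \<Rightarrow> 'a set \<Rightarrow> 'a set" where
  "nb W S = {y\<in>W. \<exists>x\<in>S. adj x y}"

definition dfc :: "('a \<Rightarrow> nat) \<Rightarrow> 'a set \<Rightarrow> 'a set \<Rightarrow> int" where
  "dfc w W S = ws w S - ws w (nb W S)"

definition feas :: "'a set \<Rightarrow> ('a \<Rightarrow> nat) \<Rightarrow> ('a \<times> 'a) list \<Rightarrow> bool" where
  "feas W w L \<longleftrightarrow> (\<forall>p\<in>set L. fst p \<in> W \<and> snd p \<in> W \<and> adj (fst p) (snd p)) \<and> (\<forall>x. cnt L x \<le> w x)"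

lemma main_ind:
  "finite W \<Longrightarrow> (\<forall>x\<in>W. w x > 0) \<Longrightarrow> sum w W = s \<Longrightarrow>
   \<exists>L S. feas W w L \<and> S \<subseteq> {x\<in>W. col x} \<and> ws w {x\<in>W. col x} \<le> int (length L) + dfc w W S"
proof (induction s arbitrary: W w rule: less_induct)
  case (less s W w)
  define A where "A = {x\<in>W. col x}"
  have finA: "finite A" using less.prems(1) by (simp add: A_def)
  show ?case
  proof (cases "\<exists>u\<in>A. \<exists>v\<in>W. adj u v")
    case False
    then have "nb W A = {}" by (auto simp: nb_def)
    then show ?thesis
      apply (rule_tac x="[]" in exI, rule_tac x=A in exI)
      by (auto simp: feas_def dfc_def A_def ws_def)
  next
    case True
    have posW: "\<And>x. x \<in> W \<Longrightarrow> w x > 0" using less.prems(2) by auto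
    have finW: "finite W" using less.prems(1) .
    have AW: "A \<subseteq> W" by (auto simp: A_def)
    have nbB: "\<And>S y. S \<subseteq> A \<Longrightarrow> y \<in> nb W S \<Longrightarrow> \<not> col y \<and> y \<in> W"
      using bipart by (auto simp: nb_def A_def)
    have finnb: "\<And>S. finite (nb W S)" using finW by (simp add: nb_def)
    have finsub: "\<And>S. S \<subseteq> A \<Longrightarrow> finite S" using finA finite_subset by blast
    define d where "d = Max (dfc w W ` Pow A)"
    have dmax: "\<And>S. S \<subseteq> A \<Longrightarrow> dfc w W S \<le> d"
      unfolding d_def using finA by (intro Max_ge) auto
    obtain Sm where Sm: "Sm \<subseteq> A" "dfc w W Sm = d"
    proof -
      have "d \<in> dfc w W ` Pow A" unfolding d_def using finA by (intro Max_in) auto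
      then show ?thesis using that by auto
    qed
    define act where "act = {x\<in>A. \<exists>y\<in>W. adj x y}"
    have actnb: "\<And>T. T \<subseteq> A \<Longrightarrow> T \<inter> act = {} \<Longrightarrow> nb W T = {}"
      by (auto simp: act_def nb_def)
    obtain u v where uA: "u \<in> A" and vW: "v \<in> W" and uv: "adj u v"
      and prp: "\<And>S'. S' \<subseteq> A \<Longrightarrow> dfc w W S' = d \<Longrightarrow> u \<notin> S' \<Longrightarrow> v \<notin> nb W S'"
    proof (cases "\<exists>S\<subseteq>A. dfc w W S = d \<and> S \<inter> act \<noteq> {}")
      case True
      define P where "P = (\<lambda>S. S\<subseteq>A \<and> dfc w W S = d \<and> S \<inter> act \<noteq> {})"
      have "\<exists>S. P S" using True by (auto simp: P_def)
      then obtain S where PS: "P S" and Smin: "\<And>S'. P S' \<Longrightarrow> card S \<le> card S'"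
        using ex_has_least_nat[where P=P and m=card] by metis
      from PS obtain u where uS: "u \<in> S" "u \<in> act" by (auto simp: P_def)
      then obtain v where v: "v \<in> W" "adj u v" by (auto simp: act_def)
      have SA: "S \<subseteq> A" and dS: "dfc w W S = d" using PS by (auto simp: P_def)
      show ?thesis
      proof (rule that[of u v])
        show "u \<in> A" using uS by (auto simp: act_def)
        show "v \<in> W" "adj u v" using v by auto
        fix S' assume S'A: "S' \<subseteq> A" and dS': "dfc w W S' = d" and uS': "u \<notin> S'"
        show "v \<notin> nb W S'"
        proof
          assume vN: "v \<in> nb W S'"
          define T where "T = S \<inter> S'"
          have finS: "finite S" "finite S'" using SA S'A finsub by auto
          have U1: "ws w (S \<union> S') + ws w T = ws w S + ws w S'"
            unfolding T_def using finS by (rule ws_Un_Int)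
          have U2: "ws w (nb W S \<union> nb W S') + ws w (nb W S \<inter> nb W S') = ws w (nb W S) + ws w (nb W S')"
            using finnb[of S] finnb[of S'] by (rule ws_Un_Int)
          have N1: "nb W (S \<union> S') = nb W S \<union> nb W S'" by (auto simp: nb_def)
          have N2: "nb W T \<subseteq> nb W S \<inter> nb W S'" by (auto simp: nb_def T_def)
          have N2': "ws w (nb W T) \<le> ws w (nb W S \<inter> nb W S')"
            using N2 finnb by (intro ws_mono) auto
          have dU: "dfc w W (S \<union> S') \<le> d" using SA S'A by (intro dmax) auto
          have dT: "dfc w W T \<le> d" using SA by (intro dmax) (auto simp: T_def)
          have dTe: "dfc w W T = d"
            using U1 U2 N2' dU[unfolded dfc_def N1] dT dS dS' unfolding dfc_def by linarith
          have "T \<inter> act = {}"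
          proof (rule ccontr)
            assume "T \<inter> act \<noteq> {}"
            then have "P T" using dTe SA by (auto simp: P_def T_def)
            then have "card S \<le> card T" by (rule Smin)
            moreover have "T \<subset> S" using uS uS' by (auto simp: T_def)
            moreover have "card T < card S" using finS(1) \<open>T \<subset> S\<close> by (rule psubset_card_mono)
            ultimately show False by linarith
          qed
          then have "nb W T = {}" using SA by (intro actnb) (auto simp: T_def)
          then have wT: "ws w T = d" using dTe by (simp add: dfc_def ws_def)
          have "ws w (nb W S \<inter> nb W S') \<le> 0"
            using U1 U2 wT dU[unfolded dfc_def N1] dS dS' unfolding dfc_def by linarith
          moreover have "ws w {v} \<le> ws w (nb W S \<inter> nb W S')"
            using vN v uS finnb by (intro ws_mono) (auto simp: nb_def)
          moreover have "ws w {v} > 0" using posW[OF v(1)] by (simp add: ws_def)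
          ultimately show False by linarith
        qed
      qed
    next
      case False
      from True obtain u v where "u \<in> A" "v \<in> W" "adj u v" by blast
      show ?thesis
      proof (rule that[of u v])
        show "u \<in> A" "v \<in> W" "adj u v" by fact+
        fix S' assume "S' \<subseteq> A" "dfc w W S' = d" "u \<notin> S'"
        then have "S' \<inter> act = {}" using False by auto
        then have "nb W S' = {}" using \<open>S' \<subseteq> A\<close> by (intro actnb)
        then show "v \<notin> nb W S'" by simp
      qed
    qed
    have uW: "u \<in> W" and cu: "col u" using uA by (auto simp: A_def)
    have cv: "\<not> col v" using bipart[OF uv] cu by auto
    have unv: "u \<noteq> v" using cu cv by auto
    define w' where "w' = w(u := w u - 1, v := w v - 1)"
    define W' where "W' = {x\<in>W. w' x > 0}"
    have finW': "finite W'" using finW by (simp add: W'_def)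
    have posW': "\<forall>x\<in>W'. w' x > 0" by (simp add: W'_def)
    have wu: "w u > 0" and wv: "w v > 0" using posW uW vW by auto
    have sum_eq: "sum w' W' = sum w' W"
      unfolding W'_def by (rule sum.mono_neutral_left) (use finW in auto)
    have "int (sum w' W) = int (sum w W) - 2"
    proof -
      have "int (sum w' W) = (\<Sum>x\<in>W. int (w' x))" by simp
      also have "\<dots> = (\<Sum>x\<in>W. int (w x) - (if x = u then 1 else 0) - (if x = v then 1 else 0))"
        by (rule sum.cong) (use wu wv unv in \<open>auto simp: w'_def\<close>)
      also have "\<dots> = (\<Sum>x\<in>W. int (w x)) - 1 - 1"
        using finW uW vW by (simp add: sum_subtractf)
      finally show ?thesis by simp
    qed
    then have lt: "sum w' W' < s" using sum_eq less.prems(3) by linarith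
    obtain L' S' where feas': "feas W' w' L'" and S'A': "S' \<subseteq> {x\<in>W'. col x}"
      and ineq: "ws w' {x\<in>W'. col x} \<le> int (length L') + dfc w' W' S'"
      using less.IH[OF lt finW' posW' refl] by blast
    have S'A: "S' \<subseteq> A" using S'A' by (auto simp: A_def W'_def)
    have vS': "v \<notin> S'" using S'A cv by (auto simp: A_def)
    have wsA: "ws w' {x\<in>W'. col x} = ws w A - 1"
    proof -
      have "ws w' {x\<in>W'. col x} = ws w' A"
        unfolding ws_def A_def W'_def by (rule sum.mono_neutral_left) (use finW in auto)
      also have "\<dots> = (\<Sum>x\<in>A. int (w x) - (if x = u then 1 else 0))"
        unfolding ws_def by (rule sum.cong) (use wu wv unv cv in \<open>auto simp: w'_def A_def\<close>)
      also have "\<dots> = ws w A - 1" using finA uA by (simp add: sum_subtractf ws_def)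
      finally show ?thesis .
    qed
    have wsS': "ws w' S' = ws w S' - (if u \<in> S' then 1 else 0)"
    proof -
      have "ws w' S' = (\<Sum>x\<in>S'. int (w x) - (if x = u then 1 else 0))"
        unfolding ws_def by (rule sum.cong) (use wu wv unv vS' in \<open>auto simp: w'_def\<close>)
      also have "\<dots> = ws w S' - (if u \<in> S' then 1 else 0)"
        using finsub[OF S'A] by (simp add: sum_subtractf ws_def)
      finally show ?thesis .
    qed
    have wsN: "ws w' (nb W' S') = ws w (nb W S') - (if v \<in> nb W S' then 1 else 0)"
    proof -
      have "ws w' (nb W' S') = ws w' (nb W S')"
        unfolding ws_def nb_def W'_def by (rule sum.mono_neutral_left) (use finW in auto)
      also have "\<dots> = (\<Sum>x\<in>nb W S'. int (w x) - (if x = v then 1 else 0))"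
        unfolding ws_def
        by (rule sum.cong) (use wu wv unv nbB[OF S'A] cu in \<open>auto simp: w'_def\<close>)
      also have "\<dots> = ws w (nb W S') - (if v \<in> nb W S' then 1 else 0)"
        using finnb[of S'] by (simp add: sum_subtractf ws_def)
      finally show ?thesis .
    qed
    have dle: "dfc w' W' S' \<le> d"
    proof -
      have "dfc w W S' \<le> d" using S'A by (rule dmax)
      moreover have "dfc w W S' = d \<Longrightarrow> u \<in> S' \<or> v \<notin> nb W S'" using prp[OF S'A] by blast
      ultimately have "dfc w W S' < d \<or> (dfc w W S' = d \<and> (u \<in> S' \<or> v \<notin> nb W S'))" by linarith
      then show ?thesis
      proof
        assume "dfc w W S' < d"
        then show ?thesis unfolding dfc_def using wsS' wsN by (simp split: if_splits; linarith)
      next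
        assume "dfc w W S' = d \<and> (u \<in> S' \<or> v \<notin> nb W S')"
        then show ?thesis unfolding dfc_def using wsS' wsN by (simp split: if_splits; linarith)
      qed
    qed
    define L where "L = (u, v) # L'"
    have e1: "\<forall>p\<in>set L. fst p \<in> W \<and> snd p \<in> W \<and> adj (fst p) (snd p)"
      using feas' uW vW uv by (auto simp: L_def feas_def W'_def)
    have e2: "\<forall>x. cnt L x \<le> w x"
    proof
      fix x
      have c: "cnt L' x \<le> w' x" using feas' by (simp add: feas_def)
      show "cnt L x \<le> w x" using c wu wv unv by (auto simp: L_def w'_def)
    qed
    have "feas W w L" using e1 e2 by (simp add: feas_def)
    moreover have "ws w A \<le> int (length L) + dfc w W Sm"
      using ineq wsA dle Sm(2) by (simp add: L_def)
    ultimately show ?thesis using Sm(1) unfolding A_def by blast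
  qed
qed

lemma ws_Un_le: "finite X \<Longrightarrow> finite Y \<Longrightarrow> ws w (X \<union> Y) \<le> ws w X + ws w Y"
  using ws_Un_Int[of X Y w] ws_nonneg[of w "X \<inter> Y"] by linarith

lemma konig:
  assumes "finite W"
  shows "\<exists>L C. feas W w L \<and> C \<subseteq> W \<and> (\<forall>x\<in>W. \<forall>y\<in>W. adj x y \<longrightarrow> x \<in> C \<or> y \<in> C)
     \<and> ws w C \<le> int (length L)"
proof -
  define Wp where "Wp = {x\<in>W. w x > 0}"
  have finWp: "finite Wp" using assms by (simp add: Wp_def)
  obtain L S where fe: "feas Wp w L" and SA: "S \<subseteq> {x\<in>Wp. col x}"
    and ineq: "ws w {x\<in>Wp. col x} \<le> int (length L) + dfc w Wp S"
    using main_ind[OF finWp _ refl, of w] by (auto simp: Wp_def)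
  define C where "C = ({x\<in>Wp. col x} - S) \<union> nb Wp S \<union> {x\<in>W. w x = 0}"
  have fe2: "feas W w L" using fe by (auto simp: feas_def Wp_def)
  have CW: "C \<subseteq> W" by (auto simp: C_def Wp_def nb_def)
  have cov: "\<forall>x\<in>W. \<forall>y\<in>W. adj x y \<longrightarrow> x \<in> C \<or> y \<in> C"
  proof (intro ballI impI)
    fix x y assume xW: "x \<in> W" and yW: "y \<in> W" and xy: "adj x y"
    show "x \<in> C \<or> y \<in> C"
    proof (cases "w x = 0 \<or> w y = 0")
      case True then show ?thesis using xW yW by (auto simp: C_def)
    next
      case False
      then have xp: "x \<in> Wp" and yp: "y \<in> Wp" using xW yW by (auto simp: Wp_def)
      have yx: "adj y x" using sym[OF xy] .
      show ?thesis
      proof (cases "col x")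
        case True
        then show ?thesis using xp yp xy by (auto simp: C_def nb_def)
      next
        case False
        then have "col y" using bipart[OF xy] by auto
        then show ?thesis using xp yp yx by (auto simp: C_def nb_def)
      qed
    qed
  qed
  have finS: "finite S" using SA finWp finite_subset[of S Wp] by auto
  have finN: "finite (nb Wp S)" using finWp by (simp add: nb_def)
  have z: "ws w {x\<in>W. w x = 0} = 0" by (simp add: ws_def)
  have "ws w C \<le> ws w (({x\<in>Wp. col x} - S) \<union> nb Wp S) + ws w {x\<in>W. w x = 0}"
    unfolding C_def using finWp finN assms by (intro ws_Un_le) auto
  also have "\<dots> \<le> ws w ({x\<in>Wp. col x} - S) + ws w (nb Wp S)"
    using z ws_Un_le[of "{x\<in>Wp. col x} - S" "nb Wp S" w] finWp finN by simp
  also have "ws w ({x\<in>Wp. col x} - S) = ws w {x\<in>Wp. col x} - ws w S"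
    unfolding ws_def using SA finWp by (subst sum_diff) auto
  finally have "ws w C \<le> int (length L)" using ineq by (simp add: dfc_def)
  then show ?thesis using fe2 CW cov by blast
qed

end

lemma dvd_small_int: fixes M z :: int
  assumes "M dvd z" "- M < z" "z < M" shows "z = 0"
proof -
  obtain q where q: "z = M * q" using assms(1) by (auto elim: dvdE)
  have M: "M > 0" using assms(2,3) by linarith
  show ?thesis
  proof (cases "q = 0")
    case False
    then have "q \<ge> 1 \<or> q \<le> -1" by linarith
    then show ?thesis
    proof
      assume "q \<ge> 1" then have "M * q \<ge> M * 1" using M by (intro mult_left_mono) auto
      then show ?thesis using q assms by linarith
    next
      assume "q \<le> -1" then have "M * q \<le> M * (-1)" using M by (intro mult_left_mono) auto
      then show ?thesis using q assms by linarith
    qed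
  qed (use q in auto)
qed

lemma circ_adj_dvd:
  assumes "1 \<le> a" "a < n"
  shows "circ_adj n a i j \<longleftrightarrow> i \<in> {1..2*n} \<and> j \<in> {1..2*n} \<and>
     (2 * int n dvd (int j - int i - int a) \<or> 2 * int n dvd (int j - int i - int n)
      \<or> 2 * int n dvd (int j - int i + int a))"
proof -
  define M where "M = 2 * int n"
  {
    assume r: "i \<in> {1..2*n}" "j \<in> {1..2*n}"
    have A: "M dvd (int j - int i - int a) \<longleftrightarrow> (int j - int i = int a \<or> int j - int i = int a - M)"
    proof
      assume h: "M dvd (int j - int i - int a)"
      show "int j - int i = int a \<or> int j - int i = int a - M"
      proof (cases "int j - int i - int a > - M")
        case True
        then have "int j - int i - int a = 0" using h r assms by (intro dvd_small_int[of M]) (auto simp: M_def)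
        then show ?thesis by simp
      next
        case False
        have "M dvd (int j - int i - int a + M)" using h by simp
        then have "int j - int i - int a + M = 0" using False r assms by (intro dvd_small_int[of M]) (auto simp: M_def)
        then show ?thesis by simp
      qed
    qed auto
    have B: "M dvd (int j - int i - int n) \<longleftrightarrow> (int j - int i = int n \<or> int j - int i = - int n)"
    proof
      assume h: "M dvd (int j - int i - int n)"
      show "int j - int i = int n \<or> int j - int i = - int n"
      proof (cases "int j - int i - int n > - M")
        case True
        then have "int j - int i - int n = 0" using h r assms by (intro dvd_small_int[of M]) (auto simp: M_def)
        then show ?thesis by simp
      next
        case False
        have "M dvd (int j - int i - int n + M)" using h by simp
        then have "int j - int i - int n + M = 0" using False r assms by (intro dvd_small_int[of M]) (auto simp: M_def)
        then show ?thesis by (simp add: M_def)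
      qed
    next
      assume "int j - int i = int n \<or> int j - int i = - int n"
      then show "M dvd (int j - int i - int n)" by (auto simp: M_def)
    qed
    have C: "M dvd (int j - int i + int a) \<longleftrightarrow> (int j - int i = - int a \<or> int j - int i = M - int a)"
    proof
      assume h: "M dvd (int j - int i + int a)"
      show "int j - int i = - int a \<or> int j - int i = M - int a"
      proof (cases "int j - int i + int a < M")
        case True
        then have "int j - int i + int a = 0" using h r assms by (intro dvd_small_int[of M]) (auto simp: M_def)
        then show ?thesis by simp
      next
        case False
        have "M dvd (int j - int i + int a - M)" using h by simp
        then have "int j - int i + int a - M = 0" using False r assms by (intro dvd_small_int[of M]) (auto simp: M_def)
        then show ?thesis by simp
      qed
    qed auto
    have "circ_adj n a i j \<longleftrightarrow> (M dvd (int j - int i - int a) \<or> M dvd (int j - int i - int n)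
      \<or> M dvd (int j - int i + int a))"
      unfolding A B C circ_adj_def Let_def using r assms by (auto simp: M_def)
  }
  then show ?thesis unfolding M_def by (auto simp: circ_adj_def)
qed


lemma circ_adj_sym: "circ_adj n a i j \<Longrightarrow> circ_adj n a j i"
  unfolding circ_adj_def Let_def by (auto split: if_splits)

lemma circ_adj_range: "circ_adj n a i j \<Longrightarrow> i \<in> {1..2*n} \<and> j \<in> {1..2*n} \<and> i \<noteq> j"
  unfolding circ_adj_def by auto

lemma conn_coprime:
  assumes a1: "1 \<le> a" and an: "a < n" and conn: "circ_connected n a"
  shows "coprime a n"
proof -
  define g where "g = gcd (int a) (int n)"
  have gd: "g dvd 2 * int n" "g dvd int a" "g dvd int n" by (auto simp: g_def)
  have stp: "g dvd (int z - int y)" if "circ_adj n a y z" for y z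
  proof -
    have "2 * int n dvd (int z - int y - int a) \<or> 2 * int n dvd (int z - int y - int n)
      \<or> 2 * int n dvd (int z - int y + int a)" using that circ_adj_dvd[OF a1 an] by blast
    then show ?thesis
    proof (elim disjE)
      assume "2 * int n dvd (int z - int y - int a)"
      then have "g dvd (int z - int y - int a)" using gd(1) dvd_trans by blast
      then have "g dvd (int z - int y - int a) + int a" using gd(2) by (rule dvd_add)
      then show ?thesis by simp
    next
      assume "2 * int n dvd (int z - int y - int n)"
      then have "g dvd (int z - int y - int n)" using gd(1) dvd_trans by blast
      then have "g dvd (int z - int y - int n) + int n" using gd(3) by (rule dvd_add)
      then show ?thesis by simp
    next
      assume "2 * int n dvd (int z - int y + int a)"
      then have "g dvd (int z - int y + int a)" using gd(1) dvd_trans by blast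
      then have "g dvd (int z - int y + int a) - int a" using gd(2) by (rule dvd_diff)
      then show ?thesis by simp
    qed
  qed
  have reach: "(circ_adj n a)\<^sup>*\<^sup>* x z \<Longrightarrow> g dvd (int z - int x)" for x z
  proof (induction rule: rtranclp_induct)
    case base then show ?case by simp
  next
    case (step y z)
    have "g dvd (int y - int x) + (int z - int y)" using step.IH stp[OF step.hyps(2)] by (rule dvd_add)
    then show ?case by simp
  qed
  have "(circ_adj n a)\<^sup>*\<^sup>* 1 2" using conn an a1 unfolding circ_connected_def by auto
  then have "g dvd 1" using reach by fastforce
  then have "g = 1" using g_def by simp
  then have "gcd a n = 1" unfolding g_def by (metis gcd_int_int_eq of_nat_eq_1_iff)
  then show ?thesis by (simp add: coprime_iff_gcd_eq_1)
qed

lemma mod_step1: fixes M p q :: int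
  assumes "M > 0" "0 \<le> p" "p < M" "0 \<le> q" "q < M" "M dvd (q - p - 1)"
  shows "q = p + 1 \<or> (p = M - 1 \<and> q = 0)"
proof (cases "q - p - 1 > - M")
  case True
  then have "q - p - 1 = 0" using assms by (intro dvd_small_int[of M]) auto
  then show ?thesis by simp
next
  case False
  have "M dvd (q - p - 1 + M)" using assms(6) by simp
  then have "q - p - 1 + M = 0" using False assms by (intro dvd_small_int[of M]) auto
  then show ?thesis using assms by auto
qed

lemma mod_step0: fixes M p q :: int
  assumes "0 \<le> p" "p < M" "0 \<le> q" "q < M" "M dvd (q - p)"
  shows "q = p"
  using dvd_small_int[of M "q - p"] assms by auto

lemma mod_stepn: fixes n p q :: int
  assumes "n > 0" "0 \<le> p" "p < 2 * n" "0 \<le> q" "q < 2 * n" "2 * n dvd (q - p - n)"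
  shows "q = p + n \<or> q = p - n"
proof (cases "q - p - n > - 2 * n")
  case True
  then have "q - p - n = 0" using assms by (intro dvd_small_int[of "2*n"]) auto
  then show ?thesis by simp
next
  case False
  have "2 * n dvd (q - p - n + 2 * n)" using assms(6) dvd_add dvd_refl by blast
  then have "q - p - n + 2 * n = 0" using False assms by (intro dvd_small_int[of "2*n"]) auto
  then show ?thesis by auto
qed

definition ccol :: "nat \<Rightarrow> nat \<Rightarrow> nat \<Rightarrow> int \<Rightarrow> nat \<Rightarrow> bool" where
  "ccol n a v b x = (if odd a \<and> odd n then odd x
     else if odd a then (odd x \<noteq> (((int x - int v) * b) mod (2 * int n) < int n))
     else (odd x \<noteq> odd (((int x - int v) * b) mod int n)))"


lemma dvd_lin: fixes M D b c a :: int
  assumes "M dvd (a * b - 1)" "M dvd (D * b - c)"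
  shows "M dvd (D - a * c)"
proof -
  have "M dvd (a * (D * b - c) - D * (a * b - 1))"
    by (rule dvd_diff[OF dvd_mult[OF assms(2)] dvd_mult[OF assms(1)]])
  moreover have "a * (D * b - c) - D * (a * b - 1) = D - a * c" by (simp add: algebra_simps)
  ultimately show ?thesis by simp
qed

lemma mod_dvd_diff: fixes M z :: int shows "M dvd (z mod M - z)"
proof -
  have "z mod M - z = - (M * (z div M))" using div_mult_mod_eq[of z M] by (simp add: algebra_simps)
  then show ?thesis by simp
qed

context
  fixes n a v :: nat and b :: int
  assumes a1: "1 \<le> a" and an: "a < n" and cop: "coprime a n" and vr: "v \<in> {1..2*n}"
    and hb: "if odd a then 2 * int n dvd (int a * b - 1) else int n dvd (int a * b - 1)"
begin

definition "D z = int z - int v"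

lemma nadj: "z \<in> {1..2*n} \<Longrightarrow> \<not> circ_adj n a v z \<Longrightarrow>
   \<not> 2 * int n dvd (D z - int a) \<and> \<not> 2 * int n dvd (D z - int n) \<and> \<not> 2 * int n dvd (D z + int a)"
  using circ_adj_dvd[OF a1 an, of v z] vr by (auto simp: D_def)

lemma Drange: "z \<in> {1..2*n} \<Longrightarrow> - (2 * int n) < D z \<and> D z < 2 * int n"
  using vr by (auto simp: D_def)

lemma excl_odd:
  assumes oa: "odd a" and zr: "z \<in> {1..2*n}" and zv: "z \<noteq> v" and nz: "\<not> circ_adj n a v z"
  defines "K \<equiv> (D z * b) mod (2 * int n)"
  shows "K \<noteq> 0 \<and> K \<noteq> 1 \<and> K \<noteq> 2 * int n - 1 \<and> K \<noteq> int n"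
proof -
  define M where "M = 2 * int n"
  have hbM: "M dvd (int a * b - 1)" using hb oa by (simp add: M_def)
  have km: "M dvd (D z * b - K)"
    using mod_dvd_diff[of M "D z * b"] unfolding K_def M_def by (metis dvd_minus_iff minus_diff_eq)
  have gen: "M dvd (D z - int a * c)" if "K = c" for c
    using dvd_lin[OF hbM] km that by simp
  have nn: "\<not> M dvd (D z - int a) \<and> \<not> M dvd (D z - int n) \<and> \<not> M dvd (D z + int a)"
    using nadj[OF zr nz] by (simp add: M_def)
  have dr: "- M < D z \<and> D z < M" using Drange[OF zr] by (simp add: M_def)
  have "K \<noteq> 0"
  proof
    assume "K = 0"
    then have "M dvd D z" using gen[of 0] by simp
    then have "D z = 0" using dr by (intro dvd_small_int[of M]) auto
    then show False using zv by (simp add: D_def)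
  qed
  moreover have "K \<noteq> 1" using gen[of 1] nn by auto
  moreover have "K \<noteq> M - 1"
  proof
    assume "K = M - 1"
    then have "M dvd (D z - int a * (M - 1))" using gen by simp
    then have "M dvd (D z - int a * (M - 1)) + M * int a" by (intro dvd_add) auto
    then show False using nn by (simp add: algebra_simps)
  qed
  moreover have "K \<noteq> int n"
  proof
    assume "K = int n"
    then have h: "M dvd (D z - int a * int n)" using gen by simp
    obtain k where k: "int a = 2 * k + 1" using oa by (metis odd_two_times_div_two_succ of_nat_1 of_nat_add of_nat_mult of_nat_numeral)
    have "M dvd (D z - int a * int n) + M * k" using h by (intro dvd_add) auto
    moreover have "(D z - int a * int n) + M * k = D z - int n" by (simp add: k M_def algebra_simps)
    ultimately show False using nn by simp
  qed
  ultimately show ?thesis by (simp add: M_def)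
qed

lemma excl_even:
  assumes ea: "even a" and zr: "z \<in> {1..2*n}" and zv: "z \<noteq> v" and nz: "\<not> circ_adj n a v z"
  shows "(D z * b) mod int n \<noteq> 0"
proof
  assume K0: "(D z * b) mod int n = 0"
  have hbM: "int n dvd (int a * b - 1)" using hb ea by simp
  have km: "int n dvd (D z * b - 0)" using K0 by (simp add: mod_eq_0_iff_dvd)
  have "int n dvd (D z - int a * 0)" using dvd_lin[OF hbM km] .
  then have nd: "int n dvd D z" by simp
  have nn: "\<not> 2 * int n dvd (D z - int n)" using nadj[OF zr nz] by simp
  have dr: "- (2 * int n) < D z \<and> D z < 2 * int n" using Drange[OF zr] .
  have "D z \<noteq> 0" using zv by (simp add: D_def)
  show False
  proof (cases "D z > 0")
    case True
    have "int n dvd (D z - int n)" using nd by (simp add: dvd_diff)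
    then have "D z - int n = 0" using dr True by (intro dvd_small_int[of "int n"]) auto
    then show False using nn by simp
  next
    case False
    have "int n dvd (D z + int n)" using nd by (simp add: dvd_add)
    then have "D z + int n = 0" using dr False \<open>D z \<noteq> 0\<close> by (intro dvd_small_int[of "int n"]) auto
    then have "D z - int n = (2 * int n) * (-1)" by simp
    then have "2 * int n dvd (D z - int n)" by (metis dvdI)
    then show False using nn by simp
  qed
qed

lemma excl_all:
  assumes "z \<in> {1..2*n}" "z \<noteq> v" "\<not> circ_adj n a v z"
  shows "(odd a \<longrightarrow> (let K = (D z * b) mod (2 * int n) in K \<noteq> 0 \<and> K \<noteq> 1 \<and> K \<noteq> 2 * int n - 1 \<and> K \<noteq> int n))
    \<and> (even a \<longrightarrow> (D z * b) mod int n \<noteq> 0)"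
  using excl_odd[OF _ assms] excl_even[OF _ assms] by (auto simp: Let_def)

lemma n_pos: "int n > 0" using a1 an by simp

lemma stepA:
  assumes xr: "x \<in> {1..2*n}" and xv: "x \<noteq> v" and nx: "\<not> circ_adj n a v x"
    and yr: "y \<in> {1..2*n}" and yv: "y \<noteq> v" and ny: "\<not> circ_adj n a v y"
    and d: "2 * int n dvd (int y - int x - int a)"
  shows "ccol n a v b x \<noteq> ccol n a v b y"
proof -
  have ev: "even (int y - int x - int a)" using d by (metis dvd_trans even_mult_iff dvd_triv_left)
  then have par: "odd y = (odd x \<noteq> odd a)" by auto
  have DD: "D y - D x = int y - int x" by (simp add: D_def)
  show ?thesis
  proof (cases "odd a")
    case oa: True
    show ?thesis
    proof (cases "odd n")
      case True then show ?thesis using oa par by (simp add: ccol_def)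
    next
      case en: False
      define M where "M = 2 * int n"
      define Kx where "Kx = (D x * b) mod M"
      define Ky where "Ky = (D y * b) mod M"
      have M0: "M > 0" using n_pos by (simp add: M_def)
      have hbM: "M dvd (int a * b - 1)" using hb oa by (simp add: M_def)
      have ex: "Kx \<noteq> 0 \<and> Kx \<noteq> 1 \<and> Kx \<noteq> M - 1 \<and> Kx \<noteq> int n"
        using excl_odd[OF oa xr xv nx] by (simp add: Kx_def M_def)
      have ey: "Ky \<noteq> 0 \<and> Ky \<noteq> 1 \<and> Ky \<noteq> M - 1 \<and> Ky \<noteq> int n"
        using excl_odd[OF oa yr yv ny] by (simp add: Ky_def M_def)
      have "M dvd ((Ky - D y * b) - (Kx - D x * b) + ((int y - int x - int a) * b + (int a * b - 1)))"
        unfolding Kx_def Ky_def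
        by (rule dvd_add[OF dvd_diff[OF mod_dvd_diff mod_dvd_diff] dvd_add[OF dvd_mult2 hbM]]) (use d in \<open>simp add: M_def\<close>)
      moreover have "(Ky - D y * b) - (Kx - D x * b) + ((int y - int x - int a) * b + (int a * b - 1)) = Ky - Kx - 1"
        by (simp add: D_def algebra_simps)
      ultimately have "M dvd (Ky - Kx - 1)" by simp
      then have "Ky = Kx + 1 \<or> (Kx = M - 1 \<and> Ky = 0)"
        using M0 by (intro mod_step1) (auto simp: Kx_def Ky_def)
      then have "Ky = Kx + 1" using ey by auto
      then have "(Ky < int n) = (Kx < int n)" using ex ey by auto
      then show ?thesis using oa en par by (simp add: ccol_def Kx_def Ky_def M_def D_def)
    qed
  next
    case ea: False
    define Kx where "Kx = (D x * b) mod int n"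
    define Ky where "Ky = (D y * b) mod int n"
    have hbM: "int n dvd (int a * b - 1)" using hb ea by simp
    have dn: "int n dvd (int y - int x - int a)" using d by (metis dvd_mult_left mult.commute)
    have ey: "Ky \<noteq> 0" using excl_even[OF _ yr yv ny] ea by (simp add: Ky_def)
    have "int n dvd ((Ky - D y * b) - (Kx - D x * b) + ((int y - int x - int a) * b + (int a * b - 1)))"
      unfolding Kx_def Ky_def
      by (rule dvd_add[OF dvd_diff[OF mod_dvd_diff mod_dvd_diff] dvd_add[OF dvd_mult2[OF dn] hbM]])
    moreover have "(Ky - D y * b) - (Kx - D x * b) + ((int y - int x - int a) * b + (int a * b - 1)) = Ky - Kx - 1"
      by (simp add: D_def algebra_simps)
    ultimately have "int n dvd (Ky - Kx - 1)" by simp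
    then have "Ky = Kx + 1 \<or> (Kx = int n - 1 \<and> Ky = 0)"
      using n_pos by (intro mod_step1) (auto simp: Kx_def Ky_def)
    then have "Ky = Kx + 1" using ey by auto
    then have "odd Ky = even Kx" by simp
    moreover have "odd n"
    proof (rule ccontr)
      assume "\<not> odd n"
      then have "(2::nat) dvd n" by simp
      moreover have "(2::nat) dvd a" using ea by simp
      ultimately have "(2::nat) dvd gcd a n" by (intro gcd_greatest)
      moreover have "gcd a n = 1" using cop by (simp add: coprime_iff_gcd_eq_1)
      ultimately show False by simp
    qed
    ultimately show ?thesis using ea par by (simp add: ccol_def Kx_def Ky_def D_def)
  qed
qed

lemma stepN:
  assumes xr: "x \<in> {1..2*n}" and xv: "x \<noteq> v" and nx: "\<not> circ_adj n a v x"
    and yr: "y \<in> {1..2*n}" and yv: "y \<noteq> v" and ny: "\<not> circ_adj n a v y"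
    and d: "2 * int n dvd (int y - int x - int n)"
  shows "ccol n a v b x \<noteq> ccol n a v b y"
proof -
  have ev: "even (int y - int x - int n)" using d by (metis dvd_trans even_mult_iff dvd_triv_left)
  then have par: "odd y = (odd x \<noteq> odd n)" by auto
  have DD: "D y - D x = int y - int x" by (simp add: D_def)
  show ?thesis
  proof (cases "odd a")
    case oa: True
    show ?thesis
    proof (cases "odd n")
      case True then show ?thesis using oa par by (simp add: ccol_def)
    next
      case en: False
      define M where "M = 2 * int n"
      define Kx where "Kx = (D x * b) mod M"
      define Ky where "Ky = (D y * b) mod M"
      have M0: "M > 0" using n_pos by (simp add: M_def)
      have hbM: "M dvd (int a * b - 1)" using hb oa by (simp add: M_def)
      have "odd (int a * b)"
      proof -
        have "2 dvd M" by (simp add: M_def)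
        then have "even (int a * b - 1)" using hbM dvd_trans by blast
        then show ?thesis by simp
      qed
      then have ob: "odd b" by simp
      then obtain k where k: "b = 2 * k + 1" by (metis oddE)
      have "M dvd ((Ky - D y * b) - (Kx - D x * b) + ((int y - int x - int n) * b + M * k))"
        unfolding Kx_def Ky_def
        by (rule dvd_add[OF dvd_diff[OF mod_dvd_diff mod_dvd_diff] dvd_add[OF dvd_mult2]]) (use d in \<open>simp_all add: M_def\<close>)
      moreover have "(Ky - D y * b) - (Kx - D x * b) + ((int y - int x - int n) * b + M * k) = Ky - Kx - int n"
        by (simp add: D_def algebra_simps M_def k)
      ultimately have "M dvd (Ky - Kx - int n)" by simp
      then have "Ky = Kx + int n \<or> Ky = Kx - int n"
        using n_pos by (intro mod_stepn) (auto simp: Kx_def Ky_def M_def)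
      moreover have "0 \<le> Kx" "Kx < M" "0 \<le> Ky" "Ky < M" using M0 by (auto simp: Kx_def Ky_def)
      ultimately have "(Ky < int n) \<noteq> (Kx < int n)" by (auto simp: M_def)
      then show ?thesis using oa en par by (simp add: ccol_def Kx_def Ky_def M_def D_def)
    qed
  next
    case ea: False
    define Kx where "Kx = (D x * b) mod int n"
    define Ky where "Ky = (D y * b) mod int n"
    have dn: "int n dvd (int y - int x - int n)" using d by (metis dvd_mult_left mult.commute)
    then have dn': "int n dvd (int y - int x)" by (metis diff_add_cancel dvd_add dvd_refl)
    have "int n dvd ((Ky - D y * b) - (Kx - D x * b) + (int y - int x) * b)"
      unfolding Kx_def Ky_def
      by (rule dvd_add[OF dvd_diff[OF mod_dvd_diff mod_dvd_diff] dvd_mult2[OF dn']])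
    moreover have "(Ky - D y * b) - (Kx - D x * b) + (int y - int x) * b = Ky - Kx"
      by (simp add: D_def algebra_simps)
    ultimately have "int n dvd (Ky - Kx)" by simp
    then have "Ky = Kx" using n_pos by (intro mod_step0[of Kx "int n" Ky]) (auto simp: Kx_def Ky_def)
    moreover have "odd n"
    proof (rule ccontr)
      assume "\<not> odd n"
      then have "(2::nat) dvd n" by simp
      moreover have "(2::nat) dvd a" using ea by simp
      ultimately have "(2::nat) dvd gcd a n" by (intro gcd_greatest)
      moreover have "gcd a n = 1" using cop by (simp add: coprime_iff_gcd_eq_1)
      ultimately show False by simp
    qed
    ultimately show ?thesis using ea par by (simp add: ccol_def Kx_def Ky_def D_def)
  qed
qed

lemma ccol_ok:
  assumes xr: "x \<in> {1..2*n}" and xv: "x \<noteq> v" and nx: "\<not> circ_adj n a v x"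
    and yr: "y \<in> {1..2*n}" and yv: "y \<noteq> v" and ny: "\<not> circ_adj n a v y"
    and xy: "circ_adj n a x y"
  shows "ccol n a v b x \<noteq> ccol n a v b y"
proof -
  have "2 * int n dvd (int y - int x - int a) \<or> 2 * int n dvd (int y - int x - int n)
      \<or> 2 * int n dvd (int y - int x + int a)" using xy circ_adj_dvd[OF a1 an] by blast
  then show ?thesis
  proof (elim disjE)
    assume "2 * int n dvd (int y - int x - int a)"
    then show ?thesis by (rule stepA[OF xr xv nx yr yv ny])
  next
    assume "2 * int n dvd (int y - int x - int n)"
    then show ?thesis by (rule stepN[OF xr xv nx yr yv ny])
  next
    assume "2 * int n dvd (int y - int x + int a)"
    then obtain k where k: "int y - int x + int a = 2 * int n * k" by (auto elim: dvdE)
    then have "int x - int y - int a = 2 * int n * (- k)" by simp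
    then have "2 * int n dvd (int x - int y - int a)" by (rule dvdI)
    then show ?thesis using stepA[OF yr yv ny xr xv nx] by auto
  qed
qed

end


lemma exists_b:
  assumes cop: "coprime a n"
  shows "\<exists>b::int. if odd a then 2 * int n dvd (int a * b - 1) else int n dvd (int a * b - 1)"
proof (cases "odd a")
  case True
  have "coprime a (2 * n)" using cop True by simp
  then have "gcd (int a) (2 * int n) = 1"
    by (metis coprime_iff_gcd_eq_1 gcd_int_int_eq of_nat_1 of_nat_mult of_nat_numeral)
  then obtain u w where "u * int a + w * (2 * int n) = 1" using bezout_int[of "int a" "2 * int n"] by auto
  then have "int a * u - 1 = (2 * int n) * (- w)" by (simp add: algebra_simps)
  then have "2 * int n dvd (int a * u - 1)" by (rule dvdI)
  then show ?thesis using True by auto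
next
  case False
  have "gcd (int a) (int n) = 1" using cop
    by (metis coprime_iff_gcd_eq_1 gcd_int_int_eq of_nat_1)
  then obtain u w where "u * int a + w * int n = 1" using bezout_int[of "int a" "int n"] by auto
  then have "int a * u - 1 = int n * (- w)" by (simp add: algebra_simps)
  then have "int n dvd (int a * u - 1)" by (rule dvdI)
  then show ?thesis using False by auto
qed

lemma cnt_zero: "(\<forall>p\<in>set L. fst p \<noteq> x \<and> snd p \<noteq> x) \<Longrightarrow> cnt L x = 0"
  by (induction L) auto

lemma cnt_le_length: "(\<forall>p\<in>set L. fst p \<noteq> snd p) \<Longrightarrow> cnt L x \<le> length L"
  by (induction L) auto

lemma nbr_list:
  assumes "finite X" "\<forall>y\<in>X. \<exists>u\<in>U. circ_adj n a u y" "X \<inter> U = {}"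
  shows "\<exists>L. length L = sum e X \<and> (\<forall>p\<in>set L. circ_adj n a (fst p) (snd p))
     \<and> (\<forall>x. x \<notin> U \<longrightarrow> cnt L x = (if x \<in> X then e x else 0))"
  using assms
proof (induction X rule: finite_induct)
  case empty then show ?case by (intro exI[of _ "[]"]) auto
next
  case (insert y X)
  obtain L where L: "length L = sum e X" "\<forall>p\<in>set L. circ_adj n a (fst p) (snd p)"
    "\<forall>x. x \<notin> U \<longrightarrow> cnt L x = (if x \<in> X then e x else 0)" using insert by auto
  obtain u where u: "u \<in> U" "circ_adj n a u y" using insert.prems by auto
  have yU: "y \<notin> U" using insert.prems by auto
  define L' where "L' = replicate (e y) (y, u) @ L"
  have "length L' = sum e (insert y X)" using L insert.hyps by (simp add: L'_def)
  moreover have "\<forall>p\<in>set L'. circ_adj n a (fst p) (snd p)"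
    using L u circ_adj_sym by (auto simp: L'_def)
  moreover have "\<forall>x. x \<notin> U \<longrightarrow> cnt L' x = (if x \<in> insert y X then e x else 0)"
    using L u yU insert.hyps by (auto simp: L'_def)
  ultimately show ?case by blast
qed

lemma comb:
  fixes n a t :: nat and e :: "nat \<Rightarrow> nat" and U :: "nat set"
  assumes a1: "1 \<le> a" and an: "a < n" and conn: "circ_connected n a"
    and UV: "U \<subseteq> {1..2*n}" and Une: "U \<noteq> {}"
    and hyp: "\<And>C. C \<subseteq> {1..2*n} \<Longrightarrow> (\<forall>i j. circ_adj n a i j \<longrightarrow> i \<in> C \<or> j \<in> C) \<Longrightarrow> C \<inter> U = {}
       \<Longrightarrow> t \<le> sum e C"
  shows "\<exists>L. length L = t \<and> (\<forall>p\<in>set L. circ_adj n a (fst p) (snd p)) \<and> (\<forall>x. x \<notin> U \<longrightarrow> cnt L x \<le> e x)"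
proof (cases "\<exists>u1\<in>U. \<exists>u2\<in>U. circ_adj n a u1 u2")
  case True
  then obtain u1 u2 where u: "u1 \<in> U" "u2 \<in> U" "circ_adj n a u1 u2" by blast
  show ?thesis
    by (rule exI[of _ "replicate t (u1, u2)"]) (use u in auto)
next
  case indep: False
  have cop: "coprime a n" using conn_coprime[OF a1 an conn] .
  obtain b where hb: "if odd a then 2 * int n dvd (int a * b - 1) else int n dvd (int a * b - 1)"
    using exists_b[OF cop] by blast
  obtain v where vU: "v \<in> U" using Une by auto
  have vr: "v \<in> {1..2*n}" using vU UV by auto
  define V where "V = {1..2*n}"
  define NU where "NU = {y\<in>V. \<exists>u\<in>U. circ_adj n a u y}"
  define W where "W = V - U - NU"
  define adj' where "adj' = (\<lambda>x y. circ_adj n a x y \<and> x \<noteq> v \<and> y \<noteq> v \<and> \<not> circ_adj n a v x \<and> \<not> circ_adj n a v y)"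
  define col where "col = ccol n a v b"
  interpret B: bip adj' col
  proof
    fix x y assume "adj' x y"
    then show "adj' y x" using circ_adj_sym by (auto simp: adj'_def)
  next
    fix x y assume h: "adj' x y"
    then have r: "x \<in> {1..2*n}" "y \<in> {1..2*n}" using circ_adj_range by (auto simp: adj'_def)
    show "col x \<noteq> col y"
      unfolding col_def by (rule ccol_ok[OF a1 an cop vr hb r(1) _ _ r(2)]) (use h in \<open>auto simp: adj'_def\<close>)
  qed
  have finW: "finite W" by (simp add: W_def V_def)
  obtain L1 C1 where fe: "B.feas W e L1" and C1W: "C1 \<subseteq> W"
    and cov1: "\<forall>x\<in>W. \<forall>y\<in>W. adj' x y \<longrightarrow> x \<in> C1 \<or> y \<in> C1"
    and le1: "ws e C1 \<le> int (length L1)"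
    using B.konig[OF finW, of e] by blast
  define C where "C = NU \<union> C1"
  have NUU: "NU \<inter> U = {}" using indep by (auto simp: NU_def)
  have CV: "C \<subseteq> {1..2*n}" using C1W by (auto simp: C_def NU_def W_def V_def)
  have CU: "C \<inter> U = {}" using NUU C1W by (auto simp: C_def W_def)
  have Ccov: "\<forall>i j. circ_adj n a i j \<longrightarrow> i \<in> C \<or> j \<in> C"
  proof (intro allI impI)
    fix i j assume ij: "circ_adj n a i j"
    have r: "i \<in> V" "j \<in> V" using circ_adj_range[OF ij] by (auto simp: V_def)
    show "i \<in> C \<or> j \<in> C"
    proof (cases "i \<in> U \<or> j \<in> U \<or> i \<in> NU \<or> j \<in> NU")
      case True
      then show ?thesis
      proof (elim disjE)
        assume "i \<in> U" then have "j \<in> NU" using r ij by (auto simp: NU_def)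
        then show ?thesis by (simp add: C_def)
      next
        assume "j \<in> U" then have "i \<in> NU" using r circ_adj_sym[OF ij] by (auto simp: NU_def)
        then show ?thesis by (simp add: C_def)
      qed (auto simp: C_def)
    next
      case False
      then have iW: "i \<in> W" and jW: "j \<in> W" using r by (auto simp: W_def)
      have "i \<noteq> v" "j \<noteq> v" using False vU by auto
      moreover have "\<not> circ_adj n a v i" "\<not> circ_adj n a v j" using False vU r by (auto simp: NU_def)
      ultimately have "adj' i j" using ij by (simp add: adj'_def)
      then show ?thesis using cov1 iW jW by (auto simp: C_def)
    qed
  qed
  have tC: "t \<le> sum e C" using hyp[OF CV Ccov CU] .
  have "sum e C + sum e (NU \<inter> C1) = sum e NU + sum e C1"
    unfolding C_def by (rule sum.union_inter) (use finW C1W finite_subset in \<open>auto simp: NU_def V_def\<close>)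
  then have "sum e C \<le> sum e NU + sum e C1" by linarith
  moreover have "int (sum e C1) = ws e C1" by (simp add: ws_def)
  ultimately have tle: "t \<le> sum e NU + length L1" using tC le1 by linarith
  have finNU: "finite NU" by (simp add: NU_def V_def)
  obtain L2 where L2: "length L2 = sum e NU" "\<forall>p\<in>set L2. circ_adj n a (fst p) (snd p)"
    "\<forall>x. x \<notin> U \<longrightarrow> cnt L2 x = (if x \<in> NU then e x else 0)"
    using nbr_list[OF finNU _ NUU, where e=e and n=n and a=a] by (auto simp: NU_def)
  define L where "L = take t (L1 @ L2)"
  have "length L = t" using tle L2(1) by (simp add: L_def)
  moreover have "\<forall>p\<in>set L. circ_adj n a (fst p) (snd p)"
  proof
    fix p assume "p \<in> set L"
    then have "p \<in> set L1 \<or> p \<in> set L2" by (auto simp: L_def dest: in_set_takeD)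
    moreover have "\<forall>p\<in>set L1. adj' (fst p) (snd p)" using fe by (simp add: B.feas_def)
    ultimately show "circ_adj n a (fst p) (snd p)"
      using L2(2) by (auto simp: adj'_def)
  qed
  moreover have "\<forall>x. x \<notin> U \<longrightarrow> cnt L x \<le> e x"
  proof (intro allI impI)
    fix x assume xU: "x \<notin> U"
    have "cnt L x \<le> cnt L1 x + cnt L2 x"
      using cnt_take_le[of t "L1 @ L2" x] by (simp add: L_def)
    moreover have "cnt L1 x \<le> e x" using fe by (simp add: B.feas_def)
    moreover have "x \<in> NU \<Longrightarrow> cnt L1 x = 0"
      using fe C1W by (intro cnt_zero) (auto simp: B.feas_def W_def)
    ultimately show "cnt L x \<le> e x" using L2(3) xU by (auto split: if_splits)
  qed
  ultimately show ?thesis by blast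
qed

definition subr :: "'a::comm_ring_1 set \<Rightarrow> bool" where
  "subr R \<longleftrightarrow> 0 \<in> R \<and> 1 \<in> R \<and> (\<forall>x\<in>R. \<forall>y\<in>R. x + y \<in> R \<and> x * y \<in> R) \<and> (\<forall>x\<in>R. - x \<in> R)"

context fixes R :: "'a::comm_ring_1 set" assumes sR: "subr R"
begin

lemma R0: "0 \<in> R" and R1: "1 \<in> R" and Radd: "x \<in> R \<Longrightarrow> y \<in> R \<Longrightarrow> x + y \<in> R"
  and Rmult: "x \<in> R \<Longrightarrow> y \<in> R \<Longrightarrow> x * y \<in> R" and Rneg: "x \<in> R \<Longrightarrow> - x \<in> R"
  using sR by (auto simp: subr_def)

lemma Rdiff: "x \<in> R \<Longrightarrow> y \<in> R \<Longrightarrow> x - y \<in> R"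
proof -
  assume "x \<in> R" "y \<in> R"
  then have "x + - y \<in> R" by (intro Radd Rneg)
  then show ?thesis by (simp only: diff_conv_add_uminus)
qed

lemma Rsum: "finite A \<Longrightarrow> (\<And>i. i \<in> A \<Longrightarrow> f i \<in> R) \<Longrightarrow> sum f A \<in> R"
  by (induction A rule: finite_induct) (auto intro: R0 Radd)

lemma Rpow: "x \<in> R \<Longrightarrow> x ^ k \<in> R"
  by (induction k) (auto intro: R1 Rmult)

lemma Rnat: "of_nat k \<in> R"
  by (induction k) (auto intro: R0 R1 Radd)

lemma ideal_sum: assumes J: "is_ideal R J" shows "finite A \<Longrightarrow> (\<And>i. i \<in> A \<Longrightarrow> f i \<in> J) \<Longrightarrow> sum f A \<in> J"
  by (induction A rule: finite_induct) (use J in \<open>auto simp: is_ideal_def\<close>)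

lemma ideal_multl: "is_ideal R J \<Longrightarrow> r \<in> R \<Longrightarrow> x \<in> J \<Longrightarrow> r * x \<in> J"
  by (auto simp: is_ideal_def)

lemma ideal_multr: "is_ideal R J \<Longrightarrow> r \<in> R \<Longrightarrow> x \<in> J \<Longrightarrow> x * r \<in> J"
  by (auto simp: is_ideal_def mult.commute)

lemma ideal_add: "is_ideal R J \<Longrightarrow> x \<in> J \<Longrightarrow> y \<in> J \<Longrightarrow> x + y \<in> J"
  by (auto simp: is_ideal_def)

lemma ideal_sub: "is_ideal R J \<Longrightarrow> J \<subseteq> R"
  by (auto simp: is_ideal_def)

lemma ideal_diff: "is_ideal R J \<Longrightarrow> x \<in> J \<Longrightarrow> y \<in> J \<Longrightarrow> x - y \<in> J"
proof -
  assume J: "is_ideal R J" and x: "x \<in> J" and y: "y \<in> J"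
  have "(- 1) * y \<in> J" using ideal_multl[OF J Rneg[OF R1] y] .
  then have "x + (- 1) * y \<in> J" using ideal_add[OF J x] by blast
  then show ?thesis by simp
qed

lemma R_ideal: "is_ideal R R"
  using R0 Radd Rmult by (auto simp: is_ideal_def)

lemma sum_split_nat: fixes k1 k2 :: nat shows "(\<Sum>i<k1+k2. f i) = (\<Sum>i<k1. f i) + (\<Sum>i<k2. f (k1 + i))"
  by (induction k2) (auto simp: add.assoc)

lemma gen_ideal_ideal:
  assumes XR: "X \<subseteq> R" shows "is_ideal R (gen_ideal R X)"
  unfolding is_ideal_def
proof (intro conjI ballI)
  show "gen_ideal R X \<subseteq> R"
    using XR by (auto simp: gen_ideal_def intro!: Rsum Rmult)
  show "0 \<in> gen_ideal R X" unfolding gen_ideal_def by (rule CollectI, rule exI[of _ 0]) auto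
next
  fix x y assume x: "x \<in> gen_ideal R X" and y: "y \<in> gen_ideal R X"
  obtain k1 r1 g1 where 1: "x = (\<Sum>(i::nat)<k1. r1 i * g1 i)" "\<forall>i<k1. r1 i \<in> R \<and> g1 i \<in> X"
    using x unfolding gen_ideal_def by blast
  obtain k2 r2 g2 where 2: "y = (\<Sum>(i::nat)<k2. r2 i * g2 i)" "\<forall>i<k2. r2 i \<in> R \<and> g2 i \<in> X"
    using y unfolding gen_ideal_def by blast
  define r where "r = (\<lambda>i. if i < k1 then r1 i else r2 (i - k1))"
  define g where "g = (\<lambda>i. if i < k1 then g1 i else g2 (i - k1))"
  have eq: "(\<Sum>i<k1+k2. r i * g i) = x + y"
    unfolding sum_split_nat 1 2 r_def g_def by simp
  have mem: "\<forall>i<k1+k2. r i \<in> R \<and> g i \<in> X" using 1 2 by (auto simp: r_def g_def)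
  show "x + y \<in> gen_ideal R X" unfolding gen_ideal_def
    by (rule CollectI, rule exI[of _ "k1+k2"], rule exI[of _ r], rule exI[of _ g]) (use eq mem in simp)
next
  fix s x assume s: "s \<in> R" and x: "x \<in> gen_ideal R X"
  obtain k r g where 1: "x = (\<Sum>(i::nat)<k. r i * g i)" "\<forall>i<k. r i \<in> R \<and> g i \<in> X"
    using x unfolding gen_ideal_def by blast
  have eq: "s * x = (\<Sum>i<k. (s * r i) * g i)" unfolding 1 by (simp add: sum_distrib_left mult.assoc)
  have mem: "\<forall>i<k. s * r i \<in> R \<and> g i \<in> X" using 1 s by (auto intro: Rmult)
  show "s * x \<in> gen_ideal R X" unfolding gen_ideal_def
    by (rule CollectI, rule exI[of _ k], rule exI[of _ "\<lambda>i. s * r i"], rule exI[of _ g]) (use eq mem in simp)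
qed

lemma gen_ideal_gen: "x \<in> X \<Longrightarrow> r \<in> R \<Longrightarrow> r * x \<in> gen_ideal R X"
  unfolding gen_ideal_def
  by (rule CollectI, rule exI[of _ 1], rule exI[of _ "\<lambda>_. r"], rule exI[of _ "\<lambda>_. x"]) auto

lemma gen_ideal_gen1: "x \<in> X \<Longrightarrow> x \<in> gen_ideal R X"
  using gen_ideal_gen[of x X 1] R1 by simp

lemma gen_ideal_least: "is_ideal R J \<Longrightarrow> X \<subseteq> J \<Longrightarrow> gen_ideal R X \<subseteq> J"
  unfolding gen_ideal_def by (auto intro!: ideal_sum ideal_multl)

lemma gen_ideal_mono: "X \<subseteq> Y \<Longrightarrow> gen_ideal R X \<subseteq> gen_ideal R Y"
  unfolding gen_ideal_def by blast

lemma ideal_pow_ideal: "I \<subseteq> R \<Longrightarrow> is_ideal R (ideal_pow R I t)"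
proof (induction t)
  case 0 then show ?case using R_ideal by simp
next
  case (Suc t)
  have "{x * y |x y. x \<in> ideal_pow R I t \<and> y \<in> I} \<subseteq> R"
    using ideal_sub[OF Suc.IH[OF Suc.prems]] Suc.prems by (auto intro: Rmult)
  then show ?case by (simp add: gen_ideal_ideal)
qed

lemma ideal_pow_mono: "I \<subseteq> J \<Longrightarrow> ideal_pow R I t \<subseteq> ideal_pow R J t"
proof (induction t)
  case (Suc t)
  then have "{x * y |x y. x \<in> ideal_pow R I t \<and> y \<in> I} \<subseteq> {x * y |x y. x \<in> ideal_pow R J t \<and> y \<in> J}"
    by blast
  then show ?case by (simp add: gen_ideal_mono)
qed simp

lemma ideal_pow_prod: "x \<in> ideal_pow R I t \<Longrightarrow> y \<in> I \<Longrightarrow> x * y \<in> ideal_pow R I (Suc t)"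
  by (simp, rule gen_ideal_gen1) blast

lemma colon_ideal: "is_ideal R J \<Longrightarrow> f \<in> R \<Longrightarrow> is_ideal R (colon R J f)"
  unfolding colon_def is_ideal_def
  by (auto intro: Radd Rmult simp: distrib_right mult.assoc)

lemma rad_add:
  assumes J: "is_ideal R J" and x: "x \<in> radical R J" and y: "y \<in> radical R J"
  shows "x + y \<in> radical R J"
proof -
  obtain k where xk: "x \<in> R" "x ^ k \<in> J" using x by (auto simp: radical_def)
  obtain l where yl: "y \<in> R" "y ^ l \<in> J" using y by (auto simp: radical_def)
  have "(x + y) ^ (k + l) = (\<Sum>i\<le>k+l. of_nat ((k+l) choose i) * x ^ i * y ^ (k + l - i))"
    by (rule binomial_ring)
  also have "\<dots> \<in> J"
  proof (rule ideal_sum[OF J], simp)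
    fix i assume "i \<in> {..k+l}"
    show "of_nat ((k+l) choose i) * x ^ i * y ^ (k + l - i) \<in> J"
    proof (cases "k \<le> i")
      case True
      have "x ^ i = x ^ (i - k) * x ^ k" using True by (simp add: power_add[symmetric])
      then have "of_nat ((k+l) choose i) * x ^ i * y ^ (k + l - i) = (of_nat ((k+l) choose i) * x ^ (i - k) * y ^ (k + l - i)) * x ^ k"
        by (simp add: algebra_simps)
      also have "\<dots> \<in> J" using xk yl by (intro ideal_multl[OF J]) (auto intro!: Rmult Rpow Rnat)
      finally show ?thesis .
    next
      case False
      have "y ^ (k + l - i) = y ^ (k - i) * y ^ l" using False by (simp add: power_add[symmetric])
      then have "of_nat ((k+l) choose i) * x ^ i * y ^ (k + l - i) = (of_nat ((k+l) choose i) * x ^ i * y ^ (k - i)) * y ^ l"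
        by (simp add: algebra_simps)
      also have "\<dots> \<in> J" using xk yl by (intro ideal_multl[OF J]) (auto intro!: Rmult Rpow Rnat)
      finally show ?thesis .
    qed
  qed
  finally show ?thesis using xk yl by (auto simp: radical_def intro: Radd)
qed

lemma rad_mult:
  assumes J: "is_ideal R J" and r: "r \<in> R" and x: "x \<in> radical R J"
  shows "r * x \<in> radical R J"
proof -
  obtain k where xk: "x \<in> R" "x ^ k \<in> J" using x by (auto simp: radical_def)
  have "(r * x) ^ k = r ^ k * x ^ k" by (simp add: power_mult_distrib)
  also have "\<dots> \<in> J" using r xk by (intro ideal_multl[OF J]) (auto intro: Rpow)
  finally show ?thesis using r xk by (auto simp: radical_def intro: Rmult)
qed

lemma rad_sum:
  assumes J: "is_ideal R J" shows "finite A \<Longrightarrow> (\<And>i. i \<in> A \<Longrightarrow> f i \<in> radical R J) \<Longrightarrow> sum f A \<in> radical R J"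
proof (induction A rule: finite_induct)
  case empty
  have "(0::'a) ^ 1 \<in> J" using J by (simp add: is_ideal_def)
  then have "(0::'a) \<in> radical R J" unfolding radical_def using R0 by blast
  then show ?case by simp
next
  case (insert x F) then show ?case using rad_add[OF J] by simp
qed

end

lemma keys_add_nat: "Poly_Mapping.keys ((a::nat \<Rightarrow>\<^sub>0 nat) + b) = Poly_Mapping.keys a \<union> Poly_Mapping.keys b"
  by (auto simp: in_keys_iff lookup_add)

lemma subr_poly: "subr (polyring N :: 'k::field mpoly set)"
  unfolding subr_def polyring_def
proof (intro conjI ballI)
  fix x y :: "'k mpoly"
  assume x: "x \<in> {p. \<forall>m\<in>Poly_Mapping.keys p. Poly_Mapping.keys m \<subseteq> {1..N}}" and y: "y \<in> {p. \<forall>m\<in>Poly_Mapping.keys p. Poly_Mapping.keys m \<subseteq> {1..N}}"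
  show "x + y \<in> {p. \<forall>m\<in>Poly_Mapping.keys p. Poly_Mapping.keys m \<subseteq> {1..N}}" using x y keys_add[of x y] by blast
  show "x * y \<in> {p. \<forall>m\<in>Poly_Mapping.keys p. Poly_Mapping.keys m \<subseteq> {1..N}}"
    using x y keys_mult[of x y] by (force simp: keys_add_nat)
next
  fix x :: "'k mpoly" assume "x \<in> {p. \<forall>m\<in>Poly_Mapping.keys p. Poly_Mapping.keys m \<subseteq> {1..N}}"
  then show "- x \<in> {p. \<forall>m\<in>Poly_Mapping.keys p. Poly_Mapping.keys m \<subseteq> {1..N}}" by simp
qed auto

lemma single_in_R: "Poly_Mapping.keys m \<subseteq> {1..N} \<Longrightarrow> (Poly_Mapping.single m c :: 'k::field mpoly) \<in> polyring N"
  by (auto simp: polyring_def)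

lemma var_in_R: "i \<in> {1..N} \<Longrightarrow> (var i :: 'k::field mpoly) \<in> polyring N"
  unfolding var_def by (rule single_in_R) auto

lemma var_pow: "(var i :: 'k::field mpoly) ^ k = Poly_Mapping.single (Poly_Mapping.single i k) 1"
proof (induction k)
  case 0 then show ?case by simp
next
  case (Suc k)
  have "(var i :: 'k mpoly) ^ Suc k = Poly_Mapping.single (Poly_Mapping.single i 1) 1 * Poly_Mapping.single (Poly_Mapping.single i k) 1"
    using Suc by (simp add: var_def)
  also have "\<dots> = Poly_Mapping.single (Poly_Mapping.single i (Suc k)) 1"
    by (simp add: mult_single single_add[symmetric])
  finally show ?case .
qed

lemma prod_single: "finite I \<Longrightarrow> (\<Prod>i\<in>I. Poly_Mapping.single (f i) (1::'k::field)) = Poly_Mapping.single (\<Sum>i\<in>I. f i) 1"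
  by (induction I rule: finite_induct) (auto simp: mult_single)

definition Emon :: "nat \<Rightarrow> (nat \<Rightarrow> nat) \<Rightarrow> (nat \<Rightarrow>\<^sub>0 nat)" where
  "Emon N e = (\<Sum>i\<in>{1..N}. Poly_Mapping.single i (e i))"

lemma monom_eq: "(monom N e :: 'k::field mpoly) = Poly_Mapping.single (Emon N e) 1"
  unfolding monom_def Emon_def by (simp add: var_pow prod_single)

lemma lookup_Emon: "Poly_Mapping.lookup (Emon N e) j = (if j \<in> {1..N} then e j else 0)"
  unfolding Emon_def by (auto simp: lookup_sum lookup_single when_def)

lemma keys_Emon: "Poly_Mapping.keys (Emon N e) \<subseteq> {1..N}"
  by (auto simp: in_keys_iff lookup_Emon split: if_splits)

definition dg :: "nat set \<Rightarrow> (nat \<Rightarrow>\<^sub>0 nat) \<Rightarrow> nat" where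
  "dg C m = (\<Sum>i\<in>C. Poly_Mapping.lookup m i)"

lemma dg_add: "dg C (a + b) = dg C a + dg C b"
  by (simp add: dg_def lookup_add sum.distrib)

lemma dg_zero[simp]: "dg C 0 = 0" by (simp add: dg_def)

lemma dg_single1: "finite C \<Longrightarrow> dg C (Poly_Mapping.single i 1) = (if i \<in> C then 1 else 0)"
  by (simp add: dg_def lookup_single when_def)

lemma dg_single1': "finite C \<Longrightarrow> dg C (Poly_Mapping.single i (Suc 0)) = (if i \<in> C then 1 else 0)"
  using dg_single1 by simp

lemma dg_Emon: "C \<subseteq> {1..N} \<Longrightarrow> dg C (Emon N e) = sum e C"
  unfolding dg_def by (rule sum.cong) (auto simp: lookup_Emon)

lemma dg_pos: "dg C m \<ge> 1 \<Longrightarrow> \<exists>i\<in>C. Poly_Mapping.lookup m i \<ge> 1"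
proof (rule ccontr)
  assume "dg C m \<ge> 1" "\<not> (\<exists>i\<in>C. Poly_Mapping.lookup m i \<ge> 1)"
  then have "\<forall>i\<in>C. Poly_Mapping.lookup m i = 0" by auto
  then have "dg C m = 0" by (simp add: dg_def)
  then show False using \<open>dg C m \<ge> 1\<close> by simp
qed

lemma keys_mult_dg_ge:
  assumes "\<forall>m\<in>Poly_Mapping.keys p. dg C m \<ge> \<alpha>" "\<forall>m\<in>Poly_Mapping.keys q. dg C m \<ge> \<beta>"
  shows "\<forall>m\<in>Poly_Mapping.keys (p * q :: 'k::field mpoly). dg C m \<ge> \<alpha> + \<beta>"
  using keys_mult[of p q] assms by (force simp: dg_add)

lemma keys_mult_dg_eq:
  assumes "\<forall>m\<in>Poly_Mapping.keys p. dg C m = \<alpha>" "\<forall>m\<in>Poly_Mapping.keys q. dg C m = \<beta>"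
  shows "\<forall>m\<in>Poly_Mapping.keys (p * q :: 'k::field mpoly). dg C m = \<alpha> + \<beta>"
  using keys_mult[of p q] assms by (force simp: dg_add)

lemma keys_pow_dg_eq:
  assumes "\<forall>m\<in>Poly_Mapping.keys p. dg C m = 0"
  shows "\<forall>m\<in>Poly_Mapping.keys (p ^ k :: 'k::field mpoly). dg C m = 0"
proof (induction k)
  case 0 then show ?case by simp
next
  case (Suc k) then show ?case using keys_mult_dg_eq[OF assms Suc] by simp
qed

lemma keys_add_P: "\<forall>m\<in>Poly_Mapping.keys p. P m \<Longrightarrow> \<forall>m\<in>Poly_Mapping.keys q. P m \<Longrightarrow> \<forall>m\<in>Poly_Mapping.keys (p + q). P m"
  using keys_add[of p q] by blast

lemma keys_sum_P: "(\<And>i. i \<in> A \<Longrightarrow> \<forall>m\<in>Poly_Mapping.keys (f i). P m) \<Longrightarrow> \<forall>m\<in>Poly_Mapping.keys (sum f A). P m"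
  using keys_sum[of f A] by blast

lemma gen_keys:
  assumes g: "g \<in> gen_ideal (polyring N) X" and X: "\<forall>x\<in>X. \<forall>m\<in>Poly_Mapping.keys x. dg C m \<ge> s"
  shows "\<forall>m\<in>Poly_Mapping.keys (g :: 'k::field mpoly). dg C m \<ge> s"
proof -
  obtain k r gg where 1: "g = (\<Sum>(i::nat)<k. r i * gg i)" "\<forall>i<k. r i \<in> polyring N \<and> gg i \<in> X"
    using g unfolding gen_ideal_def by blast
  show ?thesis unfolding 1(1)
  proof (rule keys_sum_P)
    fix i assume "i \<in> {..<k}"
    then have "\<forall>m\<in>Poly_Mapping.keys (gg i). dg C m \<ge> s" using 1 X by auto
    then show "\<forall>m\<in>Poly_Mapping.keys (r i * gg i). s \<le> dg C m"
      using keys_mult_dg_ge[where p="r i" and C=C and \<alpha>=0 and q="gg i" and \<beta>=s] by auto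
  qed
qed

definition PC :: "nat \<Rightarrow> nat set \<Rightarrow> 'k::field mpoly set" where
  "PC N C = gen_ideal (polyring N) {var i | i. i \<in> C}"

lemma PC_keys:
  assumes "finite C" "g \<in> PC N C" shows "\<forall>m\<in>Poly_Mapping.keys (g :: 'k::field mpoly). dg C m \<ge> 1"
proof -
  have "\<forall>x\<in>{var i |i. i \<in> C}. \<forall>m\<in>Poly_Mapping.keys (x :: 'k mpoly). dg C m \<ge> 1"
    using assms(1) by (auto simp: var_def dg_single1 dg_single1')
  then show ?thesis using gen_keys assms(2) unfolding PC_def by blast
qed

lemma PC_ideal: "C \<subseteq> {1..N} \<Longrightarrow> is_ideal (polyring N) (PC N C :: 'k::field mpoly set)"
  unfolding PC_def
proof (rule gen_ideal_ideal[OF subr_poly])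
  assume C: "C \<subseteq> {1..N}"
  show "{var i |i. i \<in> C} \<subseteq> (polyring N :: 'k mpoly set)"
  proof
    fix x :: "'k mpoly" assume "x \<in> {var i |i. i \<in> C}"
    then obtain i where "x = var i" "i \<in> C" by blast
    then show "x \<in> polyring N" using C var_in_R[of i N] by auto
  qed
qed

lemma pow_keys:
  assumes C: "finite C" "C \<subseteq> {1..N}"
  shows "g \<in> ideal_pow (polyring N) (PC N C) t \<Longrightarrow> \<forall>m\<in>Poly_Mapping.keys (g :: 'k::field mpoly). dg C m \<ge> t"
proof (induction t arbitrary: g)
  case 0 then show ?case by simp
next
  case (Suc t)
  have X: "\<forall>x\<in>{x * y |x y. x \<in> ideal_pow (polyring N) (PC N C :: 'k mpoly set) t \<and> y \<in> PC N C}. \<forall>m\<in>Poly_Mapping.keys (x :: 'k mpoly). dg C m \<ge> Suc t"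
  proof
    fix z :: "'k mpoly" assume "z \<in> {x * y |x y. x \<in> ideal_pow (polyring N) (PC N C :: 'k mpoly set) t \<and> y \<in> PC N C}"
    then obtain x y :: "'k mpoly" where z: "z = x * y" "x \<in> ideal_pow (polyring N) (PC N C) t" "y \<in> PC N C" by blast
    have "\<forall>m\<in>Poly_Mapping.keys (x * y). dg C m \<ge> t + 1"
      using keys_mult_dg_ge[OF Suc.IH[OF z(2)] PC_keys[OF C(1) z(3)]] .
    then show "\<forall>m\<in>Poly_Mapping.keys z. dg C m \<ge> Suc t" using z by simp
  qed
  have "g \<in> gen_ideal (polyring N) {x * y |x y. x \<in> ideal_pow (polyring N) (PC N C :: 'k mpoly set) t \<and> y \<in> PC N C}"
    using Suc.prems by simp
  from gen_keys[OF this X] show ?case .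
qed

lemma poly_expand: "p = (\<Sum>m\<in>Poly_Mapping.keys p. Poly_Mapping.single m (Poly_Mapping.lookup p m))"
  by (rule poly_mapping_eqI) (auto simp: lookup_sum lookup_single when_def in_keys_iff)

lemma PC_char:
  assumes C: "C \<subseteq> {1..N}" and gR: "g \<in> polyring N" and gk: "\<forall>m\<in>Poly_Mapping.keys g. dg C m \<ge> 1"
  shows "(g :: 'k::field mpoly) \<in> PC N C"
proof -
  have sR: "subr (polyring N :: 'k mpoly set)" by (rule subr_poly)
  have "(\<Sum>m\<in>Poly_Mapping.keys g. Poly_Mapping.single m (Poly_Mapping.lookup g m)) \<in> PC N C"
  proof (rule ideal_sum[OF sR PC_ideal[OF C]], simp)
    fix m assume m: "m \<in> Poly_Mapping.keys g"
    then have "dg C m \<ge> 1" using gk by auto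
    then obtain i where i: "i \<in> C" "Poly_Mapping.lookup m i \<ge> 1" using dg_pos by blast
    define m' where "m' = m - Poly_Mapping.single i 1"
    have mm: "m = m' + Poly_Mapping.single i 1"
      by (rule poly_mapping_eqI) (use i in \<open>auto simp: m'_def lookup_add lookup_minus lookup_single when_def\<close>)
    have km: "Poly_Mapping.keys m \<subseteq> {1..N}" using gR m by (auto simp: polyring_def)
    have km': "Poly_Mapping.keys m' \<subseteq> {1..N}" using km by (auto simp: m'_def in_keys_iff lookup_minus)
    have "Poly_Mapping.single m (Poly_Mapping.lookup g m) = Poly_Mapping.single m' (Poly_Mapping.lookup g m) * var i"
      by (simp add: var_def mult_single mm)
    also have "\<dots> \<in> PC N C" unfolding PC_def
      by (rule gen_ideal_gen[OF sR], use i in blast, rule single_in_R[OF km'])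
    finally show "Poly_Mapping.single m (Poly_Mapping.lookup g m) \<in> PC N C" .
  qed
  then show ?thesis using poly_expand[of g] by simp
qed

lemma single_pow_PC:
  assumes C: "C \<subseteq> {1..N}"
  shows "Poly_Mapping.keys E \<subseteq> {1..N} \<Longrightarrow> dg C E \<ge> t \<Longrightarrow>
     (Poly_Mapping.single E 1 :: 'k::field mpoly) \<in> ideal_pow (polyring N) (PC N C) t"
proof (induction t arbitrary: E)
  case 0 then show ?case by (simp add: single_in_R)
next
  case (Suc t)
  have fC: "finite C" using C finite_subset by blast
  have "dg C E \<ge> 1" using Suc.prems by simp
  then obtain i where i: "i \<in> C" "Poly_Mapping.lookup E i \<ge> 1" using dg_pos by blast
  define E' where "E' = E - Poly_Mapping.single i 1"
  have EE: "E = E' + Poly_Mapping.single i 1"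
    by (rule poly_mapping_eqI) (use i in \<open>auto simp: E'_def lookup_add lookup_minus lookup_single when_def\<close>)
  have kE': "Poly_Mapping.keys E' \<subseteq> {1..N}" using Suc.prems(1) by (auto simp: E'_def in_keys_iff lookup_minus)
  have "dg C E' \<ge> t" using Suc.prems(2) EE dg_add[of C E'] dg_single1[OF fC, of i] i by simp
  then have "(Poly_Mapping.single E' 1 :: 'k mpoly) \<in> ideal_pow (polyring N) (PC N C) t"
    using Suc.IH kE' by blast
  moreover have "(var i :: 'k mpoly) \<in> PC N C" unfolding PC_def
    by (rule gen_ideal_gen1[OF subr_poly]) (use i in auto)
  ultimately have "Poly_Mapping.single E' 1 * var i \<in> ideal_pow (polyring N) (PC N C :: 'k mpoly set) (Suc t)"
    by (rule ideal_pow_prod[OF subr_poly])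
  then show ?case by (simp add: var_def mult_single EE)
qed

definition lowp :: "nat set \<Rightarrow> 'k::field mpoly \<Rightarrow> 'k mpoly" where
  "lowp C g = (\<Sum>m\<in>Poly_Mapping.keys g \<inter> {m. dg C m = 0}. Poly_Mapping.single m (Poly_Mapping.lookup g m))"
definition highp :: "nat set \<Rightarrow> 'k::field mpoly \<Rightarrow> 'k mpoly" where
  "highp C g = (\<Sum>m\<in>Poly_Mapping.keys g - {m. dg C m = 0}. Poly_Mapping.single m (Poly_Mapping.lookup g m))"

lemma low_high: "g = lowp C g + highp C g"
proof -
  have "g = (\<Sum>m\<in>Poly_Mapping.keys g. Poly_Mapping.single m (Poly_Mapping.lookup g m))" by (rule poly_expand)
  also have "\<dots> = lowp C g + highp C g"
    unfolding lowp_def highp_def by (rule sum.Int_Diff) simp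
  finally show ?thesis .
qed

lemma lowp_keys: "\<forall>m\<in>Poly_Mapping.keys (lowp C g). dg C m = 0"
  unfolding lowp_def by (rule keys_sum_P) auto

lemma highp_keys: "\<forall>m\<in>Poly_Mapping.keys (highp C g). dg C m \<ge> 1"
  unfolding highp_def by (rule keys_sum_P) (auto simp: Suc_le_eq)

lemma lowp_R: "g \<in> polyring N \<Longrightarrow> lowp C g \<in> polyring N"
  unfolding lowp_def by (intro Rsum[OF subr_poly] single_in_R) (auto simp: polyring_def)

lemma highp_R: "g \<in> polyring N \<Longrightarrow> highp C g \<in> polyring N"
  unfolding highp_def by (intro Rsum[OF subr_poly] single_in_R) (auto simp: polyring_def)

lemma highp_PC: "C \<subseteq> {1..N} \<Longrightarrow> g \<in> polyring N \<Longrightarrow> highp C g \<in> PC N C"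
  by (rule PC_char, assumption, rule highp_R, assumption, rule highp_keys)

lemma lowp_nz: "C \<subseteq> {1..N} \<Longrightarrow> g \<in> polyring N \<Longrightarrow> g \<notin> PC N C \<Longrightarrow> lowp C g \<noteq> 0"
  using low_high[of g C] highp_PC[of C N g] by auto

lemma one_notin_PC: "C \<subseteq> {1..N} \<Longrightarrow> (1 :: 'k::field mpoly) \<notin> PC N C"
proof
  assume C: "C \<subseteq> {1..N}" and "(1 :: 'k mpoly) \<in> PC N C"
  then have "\<forall>m\<in>Poly_Mapping.keys (1 :: 'k mpoly). dg C m \<ge> 1" using PC_keys finite_subset by blast
  then show False by simp
qed

lemma ring_aux: "(x::'a::comm_ring_1) = a + b \<Longrightarrow> y = c + d \<Longrightarrow> a * c = x * y - (a * d + b * y)"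
  by (simp add: algebra_simps)

lemma PC_prime: assumes C: "C \<subseteq> {1..N}" shows "prime_ideal (polyring N) (PC N C :: 'k::field mpoly set)"
  unfolding prime_ideal_def
proof (intro conjI ballI impI)
  have sR: "subr (polyring N :: 'k mpoly set)" by (rule subr_poly)
  have J: "is_ideal (polyring N) (PC N C :: 'k mpoly set)" by (rule PC_ideal[OF C])
  show "is_ideal (polyring N) (PC N C :: 'k mpoly set)" by (rule J)
  show "PC N C \<noteq> (polyring N :: 'k mpoly set)" using one_notin_PC[OF C] R1[OF sR] by auto
  fix x y :: "'k mpoly" assume x: "x \<in> polyring N" and y: "y \<in> polyring N" and xy: "x * y \<in> PC N C"
  show "x \<in> PC N C \<or> y \<in> PC N C"
  proof (rule ccontr)
    assume "\<not> (x \<in> PC N C \<or> y \<in> PC N C)"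
    then have x0: "lowp C x \<noteq> 0" and y0: "lowp C y \<noteq> 0" using lowp_nz[OF C] x y by auto
    have eq: "lowp C x * lowp C y = x * y - (lowp C x * highp C y + highp C x * y)"
      by (rule ring_aux[OF low_high low_high])
    have "lowp C x * highp C y \<in> PC N C"
      by (rule ideal_multl[OF sR J], rule lowp_R[OF x], rule highp_PC[OF C y])
    moreover have "highp C x * y \<in> PC N C"
      by (rule ideal_multr[OF sR J], rule y, rule highp_PC[OF C x])
    ultimately have "lowp C x * highp C y + highp C x * y \<in> PC N C" by (rule ideal_add[OF sR J])
    then have "lowp C x * lowp C y \<in> PC N C" unfolding eq using xy by (rule ideal_diff[OF sR J, rotated])
    then have k1: "\<forall>m\<in>Poly_Mapping.keys (lowp C x * lowp C y). dg C m \<ge> 1" using PC_keys C finite_subset by blast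
    have k0: "\<forall>m\<in>Poly_Mapping.keys (lowp C x * lowp C y). dg C m = 0"
      using keys_mult_dg_eq[OF lowp_keys lowp_keys] by simp
    have "Poly_Mapping.keys (lowp C x * lowp C y) = {}" using k0 k1 by fastforce
    then have "lowp C x * lowp C y = 0" by simp
    then show False using x0 y0 by simp
  qed
qed

lemma power_lemma:
  assumes C: "C \<subseteq> {1..N}" and fR: "f \<in> polyring N" and fP: "f \<notin> PC N C"
    and kE: "Poly_Mapping.keys E \<subseteq> {1..N}" and dE: "dg C E < t"
  shows "(f :: 'k::field mpoly) ^ k * Poly_Mapping.single E 1 \<notin> ideal_pow (polyring N) (PC N C) t"
proof
  assume mem: "f ^ k * Poly_Mapping.single E 1 \<in> ideal_pow (polyring N) (PC N C) t"
  have sR: "subr (polyring N :: 'k mpoly set)" by (rule subr_poly)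
  have J: "is_ideal (polyring N) (PC N C :: 'k mpoly set)" by (rule PC_ideal[OF C])
  have fC: "finite C" using C finite_subset by blast
  define f0 where "f0 = lowp C f"
  define f1 where "f1 = highp C f"
  have ff: "f = f0 + f1" unfolding f0_def f1_def by (rule low_high)
  have f0R: "f0 \<in> polyring N" unfolding f0_def by (rule lowp_R[OF fR])
  have f1P: "f1 \<in> PC N C" unfolding f1_def by (rule highp_PC[OF C fR])
  have f00: "f0 \<noteq> 0" unfolding f0_def by (rule lowp_nz[OF C fR fP])
  have "\<exists>h\<in>PC N C. f ^ k = f0 ^ k + h" for k
  proof (induction k)
    case 0 then show ?case using J by (auto simp: is_ideal_def)
  next
    case (Suc k)
    then obtain h where h: "h \<in> PC N C" "f ^ k = f0 ^ k + h" by blast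
    have "f ^ Suc k = f * (f0 ^ k + h)" by (simp only: power_Suc h(2))
    also have "\<dots> = (f0 + f1) * (f0 ^ k + h)" by (simp only: ff)
    also have "\<dots> = f0 ^ Suc k + (f0 * h + f1 * f0 ^ k + f1 * h)" by (simp add: algebra_simps)
    finally have "f ^ Suc k = f0 ^ Suc k + (f0 * h + f1 * f0 ^ k + f1 * h)" .
    moreover have "f0 * h + f1 * f0 ^ k + f1 * h \<in> PC N C"
      using h(1) f1P f0R J sR
      by (intro ideal_add[OF sR J] ideal_multl[OF sR J] ideal_multr[OF sR J])
         (auto intro: Rpow[OF sR] ideal_sub[OF sR J, THEN subsetD])
    ultimately show ?case by blast
  qed
  then obtain h where h: "h \<in> PC N C" "f ^ k = f0 ^ k + h" by blast
  define X where "X = (Poly_Mapping.single E 1 :: 'k mpoly)"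
  have kX: "\<forall>m\<in>Poly_Mapping.keys X. dg C m = dg C E" by (simp add: X_def)
  have kX': "\<forall>m\<in>Poly_Mapping.keys X. dg C m \<ge> dg C E" by (simp add: X_def)
  have X0: "X \<noteq> 0" unfolding X_def by (metis lookup_single_eq lookup_zero one_neq_zero)
  have "f0 ^ k * X \<noteq> 0" using f00 X0 by simp
  then obtain m where m: "m \<in> Poly_Mapping.keys (f0 ^ k * X)" by fastforce
  have dm: "dg C m = dg C E"
    using keys_mult_dg_eq[OF keys_pow_dg_eq[OF lowp_keys] kX] m by (simp add: f0_def)
  have "\<forall>m\<in>Poly_Mapping.keys (h * X). dg C m \<ge> 1 + dg C E"
    using keys_mult_dg_ge[OF PC_keys[OF fC h(1)] kX'] .
  then have "m \<notin> Poly_Mapping.keys (h * X)" using dm by fastforce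
  then have "Poly_Mapping.lookup (h * X) m = 0" by (simp add: in_keys_iff)
  moreover have "f ^ k * X = f0 ^ k * X + h * X" using h(2) by (simp add: algebra_simps)
  ultimately have "Poly_Mapping.lookup (f ^ k * X) m = Poly_Mapping.lookup (f0 ^ k * X) m"
    by (simp add: lookup_add)
  then have "m \<in> Poly_Mapping.keys (f ^ k * X)" using m by (simp add: in_keys_iff)
  then have "dg C m \<ge> t" using pow_keys[OF fC C mem[folded X_def]] by blast
  then show False using dm dE by simp
qed

definition cover :: "nat \<Rightarrow> nat \<Rightarrow> nat set \<Rightarrow> bool" where
  "cover n a C \<longleftrightarrow> C \<subseteq> {1..2*n} \<and> (\<forall>i j. circ_adj n a i j \<longrightarrow> i \<in> C \<or> j \<in> C)"

definition mincover :: "nat \<Rightarrow> nat \<Rightarrow> nat set \<Rightarrow> bool" where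
  "mincover n a C \<longleftrightarrow> cover n a C \<and> (\<forall>C'. cover n a C' \<and> C' \<subseteq> C \<longrightarrow> C' = C)"

lemma exists_mincover:
  assumes "cover n a C" shows "\<exists>C0\<subseteq>C. mincover n a C0"
proof -
  define P where "P = (\<lambda>D. cover n a D \<and> D \<subseteq> C)"
  have "P C" using assms by (simp add: P_def)
  then obtain C0 where C0: "P C0" and mn: "\<And>D. P D \<Longrightarrow> card C0 \<le> card D"
    using ex_has_least_nat[where P=P and m=card] by metis
  have fin: "finite C0" using C0 by (auto simp: P_def cover_def intro: finite_subset)
  have "mincover n a C0" unfolding mincover_def
  proof (intro conjI allI impI)
    show "cover n a C0" using C0 by (simp add: P_def)
    fix C' assume h: "cover n a C' \<and> C' \<subseteq> C0"
    then have "P C'" using C0 by (auto simp: P_def)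
    then have "card C0 \<le> card C'" by (rule mn)
    then show "C' = C0" using h fin by (meson card_seteq)
  qed
  then show ?thesis using C0 by (auto simp: P_def)
qed

lemma edge_sub_R: "{var i * var j |i j. circ_adj n a i j} \<subseteq> (polyring (2*n) :: 'k::field mpoly set)"
proof
  fix x :: "'k mpoly" assume "x \<in> {var i * var j |i j. circ_adj n a i j}"
  then obtain i j where "x = var i * var j" "circ_adj n a i j" by blast
  then show "x \<in> polyring (2*n)"
    using circ_adj_range var_in_R Rmult[OF subr_poly] by metis
qed

lemma edge_ideal: "is_ideal (polyring (2*n)) (edge_ideal_circ n a :: 'k::field mpoly set)"
  unfolding edge_ideal_circ_def by (rule gen_ideal_ideal[OF subr_poly edge_sub_R])

lemma edge_in_PC:
  assumes "cover n a C" shows "(edge_ideal_circ n a :: 'k::field mpoly set) \<subseteq> PC (2*n) C"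
  unfolding edge_ideal_circ_def
proof (rule gen_ideal_least[OF subr_poly])
  have C: "C \<subseteq> {1..2*n}" using assms by (simp add: cover_def)
  show "is_ideal (polyring (2*n)) (PC (2*n) C :: 'k mpoly set)" by (rule PC_ideal[OF C])
  show "{var i * var j |i j. circ_adj n a i j} \<subseteq> (PC (2*n) C :: 'k mpoly set)"
  proof
    fix x :: "'k mpoly" assume "x \<in> {var i * var j |i j. circ_adj n a i j}"
    then obtain i j where x: "x = var i * var j" and ij: "circ_adj n a i j" by blast
    have r: "i \<in> {1..2*n}" "j \<in> {1..2*n}" using circ_adj_range[OF ij] by auto
    have "i \<in> C \<or> j \<in> C" using assms ij by (simp add: cover_def)
    then show "x \<in> PC (2*n) C"
    proof
      assume "i \<in> C"
      then have "var j * var i \<in> (PC (2*n) C :: 'k mpoly set)" unfolding PC_def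
        by (intro gen_ideal_gen[OF subr_poly]) (auto intro: var_in_R[OF r(2)])
      then show ?thesis by (simp add: x mult.commute)
    next
      assume "j \<in> C"
      then have "var i * var j \<in> (PC (2*n) C :: 'k mpoly set)" unfolding PC_def
        by (intro gen_ideal_gen[OF subr_poly]) (auto intro: var_in_R[OF r(1)])
      then show ?thesis by (simp add: x)
    qed
  qed
qed

lemma var_in_PC_iff: "finite C \<Longrightarrow> (var i :: 'k::field mpoly) \<in> PC N C \<Longrightarrow> i \<in> C"
  using PC_keys[of C "var i :: 'k mpoly" N] by (auto simp: var_def dg_single1 dg_single1' split: if_splits)

lemma prime_cover:
  assumes P: "prime_ideal (polyring (2*n)) P" and IP: "(edge_ideal_circ n a :: 'k::field mpoly set) \<subseteq> P"
  defines "C \<equiv> {i\<in>{1..2*n}. (var i :: 'k mpoly) \<in> P}"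
  shows "cover n a C \<and> PC (2*n) C \<subseteq> P"
proof
  show "cover n a C" unfolding cover_def
  proof (intro conjI allI impI)
    show "C \<subseteq> {1..2*n}" by (auto simp: C_def)
    fix i j assume ij: "circ_adj n a i j"
    have r: "i \<in> {1..2*n}" "j \<in> {1..2*n}" using circ_adj_range[OF ij] by auto
    have "(var i * var j :: 'k mpoly) \<in> edge_ideal_circ n a" unfolding edge_ideal_circ_def
      by (rule gen_ideal_gen1[OF subr_poly]) (use ij in blast)
    then have "(var i * var j :: 'k mpoly) \<in> P" using IP by auto
    then have "(var i :: 'k mpoly) \<in> P \<or> var j \<in> P" using P var_in_R r unfolding prime_ideal_def by blast
    then show "i \<in> C \<or> j \<in> C" using r by (auto simp: C_def)
  qed
  show "PC (2*n) C \<subseteq> P" unfolding PC_def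
    by (rule gen_ideal_least[OF subr_poly]) (use P in \<open>auto simp: prime_ideal_def C_def\<close>)
qed

lemma minprime_is_PC:
  assumes "P \<in> minimal_primes (polyring (2*n)) (edge_ideal_circ n a :: 'k::field mpoly set)"
  shows "\<exists>C. cover n a C \<and> P = PC (2*n) C"
proof -
  have P: "prime_ideal (polyring (2*n)) P" and IP: "edge_ideal_circ n a \<subseteq> P"
    and mn: "\<And>Q. prime_ideal (polyring (2*n)) Q \<Longrightarrow> edge_ideal_circ n a \<subseteq> Q \<Longrightarrow> Q \<subseteq> P \<Longrightarrow> Q = P"
    using assms by (auto simp: minimal_primes_def)
  define C where "C = {i\<in>{1..2*n}. (var i :: 'k mpoly) \<in> P}"
  have cC: "cover n a C" and sub: "PC (2*n) C \<subseteq> P" using prime_cover[OF P IP] by (auto simp: C_def)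
  have "PC (2*n) C = P"
    by (rule mn[OF PC_prime edge_in_PC[OF cC] sub]) (use cC in \<open>simp add: cover_def\<close>)
  then show ?thesis using cC by blast
qed

lemma mincover_minprime:
  assumes mc: "mincover n a C"
  shows "(PC (2*n) C :: 'k::field mpoly set) \<in> minimal_primes (polyring (2*n)) (edge_ideal_circ n a)"
proof -
  have cC: "cover n a C" using mc by (simp add: mincover_def)
  have C: "C \<subseteq> {1..2*n}" using cC by (simp add: cover_def)
  have fC: "finite C" using C finite_subset by blast
  have "Q = PC (2*n) C" if Q: "prime_ideal (polyring (2*n)) Q" and IQ: "edge_ideal_circ n a \<subseteq> Q"
    and QP: "Q \<subseteq> (PC (2*n) C :: 'k mpoly set)" for Q
  proof -
    define C' where "C' = {i\<in>{1..2*n}. (var i :: 'k mpoly) \<in> Q}"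
    have cC': "cover n a C'" and sub: "PC (2*n) C' \<subseteq> Q" using prime_cover[OF Q IQ] by (auto simp: C'_def)
    have "C' \<subseteq> C" using QP var_in_PC_iff[OF fC] by (auto simp: C'_def)
    then have "C' = C" using mc cC' by (auto simp: mincover_def)
    then show ?thesis using sub QP by auto
  qed
  then show ?thesis unfolding minimal_primes_def using PC_prime[OF C] edge_in_PC[OF cC] by blast
qed

definition Dl :: "(nat \<times> nat) list \<Rightarrow> (nat \<Rightarrow>\<^sub>0 nat)" where
  "Dl L = sum_list (map (\<lambda>p. Poly_Mapping.single (fst p) 1 + Poly_Mapping.single (snd p) 1) L)"

lemma lookup_Dl: "Poly_Mapping.lookup (Dl L) x = cnt L x"
  by (induction L) (auto simp: Dl_def lookup_add lookup_single when_def)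

lemma Dl_in_pow:
  "(\<forall>p\<in>set L. circ_adj n a (fst p) (snd p)) \<Longrightarrow>
   (Poly_Mapping.single (Dl L) 1 :: 'k::field mpoly) \<in> ideal_pow (polyring (2*n)) (edge_ideal_circ n a) (length L)"
proof (induction L)
  case Nil
  have "(1::'k mpoly) \<in> polyring (2*n)" using R1[OF subr_poly] .
  then show ?case by (simp add: Dl_def)
next
  case (Cons p L)
  have "(var (fst p) * var (snd p) :: 'k mpoly) \<in> edge_ideal_circ n a" unfolding edge_ideal_circ_def
    by (rule gen_ideal_gen1[OF subr_poly]) (use Cons.prems in auto)
  then have "Poly_Mapping.single (Dl L) 1 * (var (fst p) * var (snd p)) \<in> ideal_pow (polyring (2*n)) (edge_ideal_circ n a :: 'k mpoly set) (Suc (length L))"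
    using Cons by (intro ideal_pow_prod[OF subr_poly]) auto
  moreover have "Poly_Mapping.single (Dl L) 1 * (var (fst p) * var (snd p)) = (Poly_Mapping.single (Dl (p # L)) 1 :: 'k mpoly)"
    by (simp add: var_def mult_single Dl_def add_ac)
  ultimately show ?case by simp
qed

lemma single_pow: "(Poly_Mapping.single m (1::'k::field) :: 'k mpoly) ^ k = Poly_Mapping.single (\<Sum>i<k. m) 1"
  by (induction k) (auto simp del: sum_constant simp: mult_single add.commute)

theorem lemma4p2:
  fixes n a t :: nat and e :: "nat \<Rightarrow> nat"
  assumes "1 \<le> a" and "a < n"
    and "circ_connected n a"
    and "t \<ge> 1"
    and "(monom (2*n) e :: 'k::field mpoly)
           \<notin> symbolic_power (polyring (2*n)) (edge_ideal_circ n a) t"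
  shows "radical (polyring (2*n))
           (colon (polyring (2*n)) (ideal_pow (polyring (2*n)) (edge_ideal_circ n a) t)
              (monom (2*n) e :: 'k mpoly))
       = radical (polyring (2*n))
           (colon (polyring (2*n)) (symbolic_power (polyring (2*n)) (edge_ideal_circ n a) t)
              (monom (2*n) e))"
proof -
  note a1 = assms(1) and an = assms(2) and conn = assms(3) and Xns = assms(5)
  define R where "R = (polyring (2*n) :: 'k mpoly set)"
  define I where "I = (edge_ideal_circ n a :: 'k mpoly set)"
  define E where "E = Emon (2*n) e"
  define X where "X = (monom (2*n) e :: 'k mpoly)"
  have sR: "subr R" unfolding R_def by (rule subr_poly)
  have XE: "X = Poly_Mapping.single E 1" unfolding X_def E_def by (rule monom_eq)
  have kE: "Poly_Mapping.keys E \<subseteq> {1..2*n}" unfolding E_def by (rule keys_Emon)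
  have XR: "X \<in> R" unfolding XE R_def by (rule single_in_R[OF kE])
  have Iid: "is_ideal R I" unfolding R_def I_def by (rule edge_ideal)
  have IR: "I \<subseteq> R" using ideal_sub[OF sR Iid] .
  have Itid: "is_ideal R (ideal_pow R I t)" by (rule ideal_pow_ideal[OF sR IR])
  have Jid: "is_ideal R (colon R (ideal_pow R I t) X)" by (rule colon_ideal[OF sR Itid XR])
  have symb: "symbolic_power R I t = R \<inter> \<Inter> {ideal_pow R P t | P. P \<in> minimal_primes R I}"
    by (simp add: symbolic_power_def)
  have dgE: "\<And>C. C \<subseteq> {1..2*n} \<Longrightarrow> dg C E = sum e C" unfolding E_def by (rule dg_Emon)
  show ?thesis
    unfolding R_def[symmetric] I_def[symmetric] X_def[symmetric]
  proof (rule equalityI)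
    show "radical R (colon R (ideal_pow R I t) X) \<subseteq> radical R (colon R (symbolic_power R I t) X)"
    proof
      fix f assume "f \<in> radical R (colon R (ideal_pow R I t) X)"
      then obtain k where f: "f \<in> R" "f ^ k \<in> R" "f ^ k * X \<in> ideal_pow R I t"
        by (auto simp: radical_def colon_def)
      have "f ^ k * X \<in> symbolic_power R I t"
        unfolding symb
      proof (intro IntI InterI)
        show "f ^ k * X \<in> R" using f(3) ideal_sub[OF sR Itid] by auto
        fix S assume "S \<in> {ideal_pow R P t |P. P \<in> minimal_primes R I}"
        then obtain P where S: "S = ideal_pow R P t" and P: "P \<in> minimal_primes R I" by blast
        have "I \<subseteq> P" using P by (simp add: minimal_primes_def)
        then show "f ^ k * X \<in> S" using f(3) ideal_pow_mono[OF sR] S by blast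
      qed
      then show "f \<in> radical R (colon R (symbolic_power R I t) X)"
        using f by (auto simp: radical_def colon_def)
    qed
  next
    show "radical R (colon R (symbolic_power R I t) X) \<subseteq> radical R (colon R (ideal_pow R I t) X)"
    proof
      fix f assume "f \<in> radical R (colon R (symbolic_power R I t) X)"
      then obtain k where fR: "f \<in> R" and fk: "f ^ k * X \<in> symbolic_power R I t"
        by (auto simp: radical_def colon_def)
      obtain C0 where C0: "cover n a C0" "sum e C0 < t"
      proof -
        have "X \<notin> symbolic_power R I t" using Xns by (simp add: R_def I_def X_def)
        then obtain P where P: "P \<in> minimal_primes R I" and XP: "X \<notin> ideal_pow R P t"
          using XR unfolding symb by blast
        obtain C where C: "cover n a C" "P = PC (2*n) C"
          using minprime_is_PC[of P n a] P by (auto simp: R_def I_def)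
        have Cs: "C \<subseteq> {1..2*n}" using C(1) by (simp add: cover_def)
        have "sum e C < t"
        proof (rule ccontr)
          assume "\<not> sum e C < t"
          then have "dg C E \<ge> t" using dgE[OF Cs] by simp
          then have "X \<in> ideal_pow R P t" unfolding XE R_def C(2) by (rule single_pow_PC[OF Cs kE])
          then show False using XP by simp
        qed
        then show ?thesis using that C(1) by blast
      qed
      have fPC: "f \<in> PC (2*n) C" if mc: "mincover n a C" and sC: "sum e C < t" for C
      proof (rule ccontr)
        assume nf: "f \<notin> PC (2*n) C"
        have Cs: "C \<subseteq> {1..2*n}" using mc by (simp add: mincover_def cover_def)
        have "PC (2*n) C \<in> minimal_primes R I" unfolding R_def I_def by (rule mincover_minprime[OF mc])
        then have "f ^ k * X \<in> ideal_pow R (PC (2*n) C) t" using fk unfolding symb by blast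
        moreover have "f ^ k * X \<notin> ideal_pow R (PC (2*n) C) t"
          unfolding XE R_def by (rule power_lemma[OF Cs fR[unfolded R_def] nf kE]) (use dgE[OF Cs] sC in simp)
        ultimately show False by simp
      qed
      have mono: "Poly_Mapping.single m 1 \<in> radical R (colon R (ideal_pow R I t) X)"
        if m: "m \<in> Poly_Mapping.keys f" for m
      proof -
        define U where "U = Poly_Mapping.keys m"
        have UV: "U \<subseteq> {1..2*n}" using fR m by (auto simp: R_def polyring_def U_def)
        have hyp: "t \<le> sum e C" if Cs: "C \<subseteq> {1..2*n}" and Cc: "\<forall>i j. circ_adj n a i j \<longrightarrow> i \<in> C \<or> j \<in> C"
          and CU: "C \<inter> U = {}" for C
        proof (rule ccontr)
          assume "\<not> t \<le> sum e C"
          have cC: "cover n a C" using Cs Cc by (simp add: cover_def)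
          obtain C' where C': "C' \<subseteq> C" "mincover n a C'" using exists_mincover[OF cC] by blast
          have "finite C" using Cs finite_subset by blast
          then have "sum e C' \<le> sum e C" using C'(1) by (intro sum_mono2) auto
          then have "sum e C' < t" using \<open>\<not> t \<le> sum e C\<close> by simp
          then have "f \<in> PC (2*n) C'" using fPC C'(2) by blast
          moreover have "finite C'" using C'(1) \<open>finite C\<close> finite_subset by blast
          ultimately have "dg C' m \<ge> 1" using PC_keys m by blast
          then obtain i where "i \<in> C'" "Poly_Mapping.lookup m i \<ge> 1" using dg_pos by blast
          then have "i \<in> C \<inter> U" using C'(1) by (auto simp: U_def in_keys_iff)
          then show False using CU by simp
        qed
        have Une: "U \<noteq> {}"
        proof
          assume "U = {}"
          then have "t \<le> sum e C0" using hyp C0(1) by (auto simp: cover_def)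
          then show False using C0(2) by simp
        qed
        obtain L where L: "length L = t" "\<forall>p\<in>set L. circ_adj n a (fst p) (snd p)"
          "\<forall>x. x \<notin> U \<longrightarrow> cnt L x \<le> e x"
          using comb[OF a1 an conn UV Une hyp] by blast
        define T where "T = (\<Sum>i<t. m) + E"
        have lT: "Poly_Mapping.lookup T x = t * Poly_Mapping.lookup m x + Poly_Mapping.lookup E x" for x
          by (simp del: sum_constant add: T_def lookup_add lookup_sum) (simp add: sum_constant)
        have cntle: "cnt L x \<le> Poly_Mapping.lookup T x" for x
        proof (cases "x \<in> U")
          case True
          have "\<forall>p\<in>set L. fst p \<noteq> snd p"
          proof
            fix p assume "p \<in> set L"
            then have "circ_adj n a (fst p) (snd p)" using L(2) by blast
            then show "fst p \<noteq> snd p" using circ_adj_range by blast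
          qed
          then have "cnt L x \<le> length L" by (rule cnt_le_length)
          moreover have "Poly_Mapping.lookup m x \<ge> 1" using True by (auto simp: U_def in_keys_iff)
          then have "t \<le> t * Poly_Mapping.lookup m x" by simp
          ultimately show ?thesis using L(1) lT[of x] by linarith
        next
          case False
          show ?thesis
          proof (cases "x \<in> {1..2*n}")
            case True
            then have "Poly_Mapping.lookup E x = e x" by (simp add: E_def lookup_Emon)
            moreover have "cnt L x \<le> e x" using L(3) \<open>x \<notin> U\<close> by blast
            ultimately show ?thesis using lT[of x] by simp
          next
            case False
            have "\<forall>p\<in>set L. fst p \<noteq> x \<and> snd p \<noteq> x"
            proof
              fix p assume "p \<in> set L"
              then have "circ_adj n a (fst p) (snd p)" using L(2) by blast
              then have "fst p \<in> {1..2*n}" "snd p \<in> {1..2*n}" using circ_adj_range by blast+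
              then show "fst p \<noteq> x \<and> snd p \<noteq> x" using False by auto
            qed
            from cnt_zero[OF this] show ?thesis by simp
          qed
        qed
        define r where "r = T - Dl L"
        have Tr: "T = Dl L + r"
          by (rule poly_mapping_eqI) (use cntle in \<open>simp add: r_def lookup_add lookup_minus lookup_Dl\<close>)
        have kr: "Poly_Mapping.keys r \<subseteq> {1..2*n}"
        proof
          fix x assume "x \<in> Poly_Mapping.keys r"
          then have "Poly_Mapping.lookup T x \<noteq> 0" by (auto simp: r_def in_keys_iff lookup_minus)
          then have "x \<in> U \<or> x \<in> Poly_Mapping.keys E" using lT[of x] by (auto simp: U_def in_keys_iff)
          then show "x \<in> {1..2*n}" using UV kE by auto
        qed
        have "Poly_Mapping.single m 1 ^ t * X = Poly_Mapping.single (Dl L) 1 * Poly_Mapping.single r 1"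
          unfolding single_pow XE by (simp del: sum_constant add: mult_single T_def[symmetric] Tr)
        also have "\<dots> \<in> ideal_pow R I t"
          using Dl_in_pow[OF L(2), where 'k='k] L(1) single_in_R[OF kr, where 'k='k]
          by (intro ideal_multr[OF sR ideal_pow_ideal[OF sR IR]]) (auto simp: R_def I_def)
        finally have inI: "Poly_Mapping.single m 1 ^ t * X \<in> ideal_pow R I t" .
        have mR: "Poly_Mapping.single m 1 \<in> R" unfolding R_def using UV by (intro single_in_R) (simp add: U_def)
        show ?thesis using inI mR Rpow[OF sR mR] by (auto simp: radical_def colon_def)
      qed
      have "f = (\<Sum>m\<in>Poly_Mapping.keys f. Poly_Mapping.single 0 (Poly_Mapping.lookup f m) * Poly_Mapping.single m 1)"
        using poly_expand[of f] by (simp add: mult_single)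
      also have "\<dots> \<in> radical R (colon R (ideal_pow R I t) X)"
      proof (rule rad_sum[OF sR Jid], simp)
        fix m assume "m \<in> Poly_Mapping.keys f"
        moreover have "Poly_Mapping.single 0 (Poly_Mapping.lookup f m) \<in> R"
          unfolding R_def by (rule single_in_R) simp
        ultimately show "Poly_Mapping.single 0 (Poly_Mapping.lookup f m) * Poly_Mapping.single m 1 \<in> radical R (colon R (ideal_pow R I t) X)"
          using mono by (intro rad_mult[OF sR Jid]) auto
      qed
      finally show "f \<in> radical R (colon R (ideal_pow R I t) X)" .
    qed
  qed
qed

end
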